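(* Let $G$ be a profinite group, $A$ a commutative ring with $2A=0$ (discrete topology), and $D_0:A[G]\to A$ the trivial $2$-dimensional determinant (the determinant of the trivial representation $G\to\mathrm{GL}_2(A)$). Let $\mathcal T$ be the set of continuous $2$-dimensional determinants $D$ on $G$ over $A[\epsilon]$, $\epsilon^2=0$, with $D\otimes_{A[\epsilon]}A=D_0$. Each such $D$ has trace of the form $2+\epsilon\tau$ and restriction to $G$ of the form $1+\epsilon\delta$ for unique maps $\tau,\delta:G\to A$. The map $D\mapsto(\tau,\delta)$ is a bijection (linear for the natural $A$-module structure on $\mathcal T$) onto the set of pairs $(t,d)$ of continuous maps $G/G^2\to A$ with $t(1)=0$ and $d$ a group homomorphism, where $G^2$ is the closed subgroup of $G$ generated by squares.
   Context: A $2$-dimensional determinant on a group $G$ over a commutative ring $C$ is a multiplicative $C$-polynomial law $C[G]\to C$ homogeneous of degree $2$; its trace $\mathrm{Tr}$ and its restriction to $G$ are given by $\mathrm D(gU+hV)=\mathrm D(g)U^2+(\mathrm{Tr}(g)\mathrm{Tr}(h)-\mathrm{Tr}(gh))UV+\mathrm D(h)V^2$. It is continuous if $g\mapsto\mathrm{Tr}(g)$ and $g\mapsto\mathrm D(g)$ are continuous. $G^2$ is a closed normal subgroup with $G/G^2$ an elementary abelian pro-$2$ group. *)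

theory Defs
  imports "HOL-Analysis.Analysis" "HOL-Algebra.Generated_Groups" "HOL-Library.Poly_Mapping"
    "HOL-Computational_Algebra.Polynomial"
begin

datatype 'a dual = Dual (re: 'a) (eps: 'a)

instantiation dual :: (comm_ring_1) comm_ring_1
begin
definition "0 = Dual 0 0"
definition "1 = Dual 1 0"
definition "x + y = Dual (re x + re y) (eps x + eps y)"
definition "x - y = Dual (re x - re y) (eps x - eps y)"
definition "- x = Dual (- re x) (- eps x)"
definition "x * y = Dual (re x * re y) (re x * eps y + eps x * re y)"
instance
  by standard (auto simp: zero_dual_def one_dual_def plus_dual_def minus_dual_def
      uminus_dual_def times_dual_def algebra_simps intro!: dual.expand)
end

definition totally_disconnected_space :: "'a topology \<Rightarrow> bool" where
  "totally_disconnected_space T \<longleftrightarrow> (\<forall>S. connectedin T S \<longrightarrow> (\<exists>a. S \<subseteq> {a}))"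

definition profinite_group :: "('g, 'b) monoid_scheme \<Rightarrow> 'g topology \<Rightarrow> bool" where
  "profinite_group G T \<longleftrightarrow> group G \<and> topspace T = carrier G
     \<and> continuous_map (prod_topology T T) T (\<lambda>(x, y). x \<otimes>\<^bsub>G\<^esub> y)
     \<and> continuous_map T T (\<lambda>x. inv\<^bsub>G\<^esub> x)
     \<and> compact_space T \<and> Hausdorff_space T \<and> totally_disconnected_space T"

definition sq_subgroup :: "('g, 'b) monoid_scheme \<Rightarrow> 'g topology \<Rightarrow> 'g set" where
  "sq_subgroup G T = T closure_of (generate G {g \<otimes>\<^bsub>G\<^esub> g | g. g \<in> carrier G})"

text \<open>Elements of B[G] for a commutative ring B: finitely supported functions on carrier G.\<close>
definition galg_elem :: "('g, 'b) monoid_scheme \<Rightarrow> ('g \<Rightarrow> 'r::zero) \<Rightarrow> bool" where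
  "galg_elem G x \<longleftrightarrow> finite {g. x g \<noteq> 0} \<and> {g. x g \<noteq> 0} \<subseteq> carrier G"

definition galg_mult :: "('g, 'b) monoid_scheme \<Rightarrow> ('g \<Rightarrow> 'r::comm_ring_1) \<Rightarrow> ('g \<Rightarrow> 'r) \<Rightarrow> 'g \<Rightarrow> 'r" where
  "galg_mult G x y = (\<lambda>k. \<Sum>(g, h)\<in>{(g, h). x g \<noteq> 0 \<and> y h \<noteq> 0 \<and> g \<otimes>\<^bsub>G\<^esub> h = k}. x g * y h)"

definition galg_one :: "('g, 'b) monoid_scheme \<Rightarrow> 'g \<Rightarrow> 'r::comm_ring_1" where
  "galg_one G = (\<lambda>k. if k = \<one>\<^bsub>G\<^esub> then 1 else 0)"

definition monos2 :: "'g set \<Rightarrow> ('g \<Rightarrow>\<^sub>0 nat) set" where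
  "monos2 S = {\<alpha>. Poly_Mapping.keys \<alpha> \<subseteq> S \<and> (\<Sum>g\<in>Poly_Mapping.keys \<alpha>. Poly_Mapping.lookup \<alpha> g) = 2}"

text \<open>A C-polynomial law C[G] -> C homogeneous of degree 2 is given by its coefficient family
  c on degree-2 monomials; its value on x in B[G] (B a C-algebra via phi) is the following.\<close>
definition law_eval :: "(('g \<Rightarrow>\<^sub>0 nat) \<Rightarrow> 'c) \<Rightarrow> ('c \<Rightarrow> 'r::comm_ring_1) \<Rightarrow> ('g \<Rightarrow> 'r) \<Rightarrow> 'r" where
  "law_eval c \<phi> x = (\<Sum>\<alpha>\<in>monos2 {g. x g \<noteq> 0}. \<phi> (c \<alpha>) * (\<Prod>g\<in>Poly_Mapping.keys \<alpha>. x g ^ Poly_Mapping.lookup \<alpha> g))"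

definition law2 :: "('g, 'b) monoid_scheme \<Rightarrow> (('g \<Rightarrow>\<^sub>0 nat) \<Rightarrow> 'c::comm_ring_1) \<Rightarrow> bool" where
  "law2 G c \<longleftrightarrow> (\<forall>\<alpha>. \<alpha> \<notin> monos2 (carrier G) \<longrightarrow> c \<alpha> = 0)"

text \<open>Multiplicativity, tested on the generic elements, i.e. over the polynomial C-algebras
  C[X_(g,i)] (variables indexed by G x bool).\<close>
definition det2 :: "('g, 'b) monoid_scheme \<Rightarrow> (('g \<Rightarrow>\<^sub>0 nat) \<Rightarrow> 'c::comm_ring_1) \<Rightarrow> bool" where
  "det2 G c \<longleftrightarrow> law2 G c
     \<and> law_eval c (\<lambda>a. Poly_Mapping.single 0 a) (galg_one G)
         = (1 :: (('g \<times> bool) \<Rightarrow>\<^sub>0 nat) \<Rightarrow>\<^sub>0 'c)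
     \<and> (\<forall>x y :: 'g \<Rightarrow> (('g \<times> bool) \<Rightarrow>\<^sub>0 nat) \<Rightarrow>\<^sub>0 'c. galg_elem G x \<longrightarrow> galg_elem G y \<longrightarrow>
          law_eval c (\<lambda>a. Poly_Mapping.single 0 a) (galg_mult G x y)
          = law_eval c (\<lambda>a. Poly_Mapping.single 0 a) x * law_eval c (\<lambda>a. Poly_Mapping.single 0 a) y)"

text \<open>Trace: Tr(g) is minus the coefficient of t in the characteristic polynomial D(t - g).\<close>
definition det_trace :: "('g, 'b) monoid_scheme \<Rightarrow> (('g \<Rightarrow>\<^sub>0 nat) \<Rightarrow> 'c::comm_ring_1) \<Rightarrow> 'g \<Rightarrow> 'c" where
  "det_trace G c g = - coeff (law_eval c (\<lambda>a. [:a:])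
      (\<lambda>k. (if k = \<one>\<^bsub>G\<^esub> then [:0, 1:] else 0) - (if k = g then 1 else 0))) 1"

definition det_on :: "('g, 'b) monoid_scheme \<Rightarrow> (('g \<Rightarrow>\<^sub>0 nat) \<Rightarrow> 'c::comm_ring_1) \<Rightarrow> 'g \<Rightarrow> 'c" where
  "det_on G c g = law_eval c id (\<lambda>k. if k = g then 1 else 0)"

text \<open>The trivial determinant D_0(x) = det((sum_g x_g) I_2) = (sum_g x_g)^2.\<close>
definition trivial_det :: "('g, 'b) monoid_scheme \<Rightarrow> ('g \<Rightarrow>\<^sub>0 nat) \<Rightarrow> 'a::comm_ring_1" where
  "trivial_det G \<alpha> = (if \<alpha> \<in> monos2 (carrier G) then (if card (Poly_Mapping.keys \<alpha>) = 1 then 1 else 2) else 0)"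

text \<open>Base change A[eps] -> A (eps -> 0) of a law, on coefficients.\<close>
definition reduce_law :: "(('g \<Rightarrow>\<^sub>0 nat) \<Rightarrow> 'a dual) \<Rightarrow> ('g \<Rightarrow>\<^sub>0 nat) \<Rightarrow> 'a" where
  "reduce_law c = (\<lambda>\<alpha>. re (c \<alpha>))"

definition tangent_dets :: "('g, 'b) monoid_scheme \<Rightarrow> 'g topology \<Rightarrow> (('g \<Rightarrow>\<^sub>0 nat) \<Rightarrow> 'a::comm_ring_1 dual) set" where
  "tangent_dets G T = {c. det2 G c
      \<and> continuous_map T (discrete_topology UNIV) (det_trace G c)
      \<and> continuous_map T (discrete_topology UNIV) (det_on G c)
      \<and> reduce_law c = trivial_det G}"

text \<open>Natural A-module structure on the tangent space (fibre product over A, and eps -> a eps).\<close>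
definition tangent_add :: "(('g \<Rightarrow>\<^sub>0 nat) \<Rightarrow> 'a::comm_ring_1 dual) \<Rightarrow> (('g \<Rightarrow>\<^sub>0 nat) \<Rightarrow> 'a dual) \<Rightarrow> ('g \<Rightarrow>\<^sub>0 nat) \<Rightarrow> 'a dual" where
  "tangent_add c1 c2 = (\<lambda>\<alpha>. Dual (re (c1 \<alpha>)) (eps (c1 \<alpha>) + eps (c2 \<alpha>)))"

definition tangent_smult :: "'a::comm_ring_1 \<Rightarrow> (('g \<Rightarrow>\<^sub>0 nat) \<Rightarrow> 'a dual) \<Rightarrow> ('g \<Rightarrow>\<^sub>0 nat) \<Rightarrow> 'a dual" where
  "tangent_smult a c = (\<lambda>\<alpha>. Dual (re (c \<alpha>)) (a * eps (c \<alpha>)))"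

definition tau_delta :: "('g, 'b) monoid_scheme \<Rightarrow> (('g \<Rightarrow>\<^sub>0 nat) \<Rightarrow> 'a::comm_ring_1 dual) \<Rightarrow> ('g \<Rightarrow> 'a) \<times> ('g \<Rightarrow> 'a)" where
  "tau_delta G c = ((\<lambda>g\<in>carrier G. eps (det_trace G c g)), (\<lambda>g\<in>carrier G. eps (det_on G c g)))"

text \<open>Pairs (t, d) of continuous maps G/G^2 -> A (as maps on G invariant under G^2),
  t(1) = 0, d a homomorphism to (A, +).\<close>
definition quot_pairs :: "('g, 'b) monoid_scheme \<Rightarrow> 'g topology \<Rightarrow> (('g \<Rightarrow> 'a::comm_ring_1) \<times> ('g \<Rightarrow> 'a)) set" where
  "quot_pairs G T = {(t, d). t \<in> extensional (carrier G) \<and> d \<in> extensional (carrier G)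
      \<and> continuous_map T (discrete_topology UNIV) t \<and> continuous_map T (discrete_topology UNIV) d
      \<and> (\<forall>g\<in>carrier G. \<forall>h\<in>sq_subgroup G T. t (g \<otimes>\<^bsub>G\<^esub> h) = t g \<and> d (g \<otimes>\<^bsub>G\<^esub> h) = d g)
      \<and> t \<one>\<^bsub>G\<^esub> = 0
      \<and> (\<forall>g\<in>carrier G. \<forall>h\<in>carrier G. d (g \<otimes>\<^bsub>G\<^esub> h) = d g + d h)}"

end

theory Submission
  imports Defs
begin

definition sq2 :: "'g \<Rightarrow> ('g \<Rightarrow>\<^sub>0 nat)" where
  "sq2 g = Poly_Mapping.single g 2"
definition pr2 :: "'g \<Rightarrow> 'g \<Rightarrow> ('g \<Rightarrow>\<^sub>0 nat)" where
  "pr2 a b = Poly_Mapping.single a 1 + Poly_Mapping.single b 1"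

lemma pr2_comm: "pr2 a b = pr2 b a"
  by (simp add: pr2_def add.commute)

lemma lookup_sq2: "Poly_Mapping.lookup (sq2 g) k = (if k = g then 2 else 0)"
  by (simp add: sq2_def lookup_single when_def)

lemma lookup_pr2: "a \<noteq> b \<Longrightarrow> Poly_Mapping.lookup (pr2 a b) k = (if k = a \<or> k = b then 1 else 0)"
  by (auto simp add: pr2_def lookup_add lookup_single when_def)

lemma keys_sq2: "Poly_Mapping.keys (sq2 g) = {g}"
  by (simp add: sq2_def)

lemma keys_pr2: "a \<noteq> b \<Longrightarrow> Poly_Mapping.keys (pr2 a b) = {a, b}"
  by (auto simp add: in_keys_iff lookup_pr2 split: if_splits)

lemma sum_eq_2_cases:
  fixes f :: "'g \<Rightarrow> nat"
  assumes "finite K" "\<And>k. k \<in> K \<Longrightarrow> f k \<noteq> 0" "sum f K = 2"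
  shows "(\<exists>g. K = {g} \<and> f g = 2) \<or> (\<exists>a b. a \<noteq> b \<and> K = {a, b} \<and> f a = 1 \<and> f b = 1)"
proof -
  have "card K \<le> sum f K"
    using assms(1,2)
  proof (induction K rule: finite_induct)
    case (insert x F)
    have "0 < f x" using insert.prems by blast
    hence "f x \<ge> 1" by simp
    thus ?case using insert by simp
  qed simp
  hence c: "card K \<le> 2" using assms(3) by simp
  have "K \<noteq> {}" using assms(3) by auto
  hence "card K \<noteq> 0" using assms(1) by simp
  hence "card K = 1 \<or> card K = 2" using c by linarith
  thus ?thesis
  proof
    assume "card K = 1"
    then obtain g where "K = {g}" by (auto simp: card_Suc_eq)
    thus ?thesis using assms(3) by auto
  next
    assume "card K = 2"
    then obtain a b where ab: "K = {a, b}" "a \<noteq> b" by (auto simp: card_Suc_eq numeral_2_eq_2)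
    hence "f a + f b = 2" using assms(3) by simp
    moreover have "f a \<noteq> 0" "f b \<noteq> 0" using assms(2) ab by auto
    ultimately have "f a = 1" "f b = 1" by linarith+
    thus ?thesis using ab by blast
  qed
qed

lemma monos2_char:
  "monos2 S = sq2 ` S \<union> (\<lambda>(a, b). pr2 a b) ` {(a, b). a \<in> S \<and> b \<in> S \<and> a \<noteq> b}"
proof (intro equalityI subsetI)
  fix \<alpha> assume "\<alpha> \<in> monos2 S"
  hence k: "Poly_Mapping.keys \<alpha> \<subseteq> S" and s: "(\<Sum>g\<in>Poly_Mapping.keys \<alpha>. Poly_Mapping.lookup \<alpha> g) = 2"
    by (auto simp: monos2_def)
  have "(\<exists>g. Poly_Mapping.keys \<alpha> = {g} \<and> Poly_Mapping.lookup \<alpha> g = 2) \<or>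
    (\<exists>a b. a \<noteq> b \<and> Poly_Mapping.keys \<alpha> = {a, b} \<and> Poly_Mapping.lookup \<alpha> a = 1 \<and> Poly_Mapping.lookup \<alpha> b = 1)"
    by (rule sum_eq_2_cases[OF finite_keys _ s]) (simp add: in_keys_iff)
  then show "\<alpha> \<in> sq2 ` S \<union> (\<lambda>(a, b). pr2 a b) ` {(a, b). a \<in> S \<and> b \<in> S \<and> a \<noteq> b}"
  proof (elim disjE exE conjE)
    fix g assume kg: "Poly_Mapping.keys \<alpha> = {g}" "Poly_Mapping.lookup \<alpha> g = 2"
    have "\<alpha> = sq2 g"
    proof (intro poly_mapping_eqI)
      fix k show "Poly_Mapping.lookup \<alpha> k = Poly_Mapping.lookup (sq2 g) k"
      proof (cases "k = g")
        case False
        hence "k \<notin> Poly_Mapping.keys \<alpha>" using kg by auto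
        thus ?thesis using False by (simp add: lookup_sq2 in_keys_iff)
      qed (simp add: kg lookup_sq2)
    qed
    thus ?thesis using k \<open>Poly_Mapping.keys \<alpha> = {g}\<close> by auto
  next
    fix a b assume ab: "a \<noteq> b" "Poly_Mapping.keys \<alpha> = {a, b}"
      "Poly_Mapping.lookup \<alpha> a = 1" "Poly_Mapping.lookup \<alpha> b = 1"
    hence "\<alpha> = pr2 a b"
      by (intro poly_mapping_eqI) (metis in_keys_iff insert_iff lookup_pr2 singletonD)
    thus ?thesis using k ab by auto
  qed
next
  fix \<alpha> assume "\<alpha> \<in> sq2 ` S \<union> (\<lambda>(a, b). pr2 a b) ` {(a, b). a \<in> S \<and> b \<in> S \<and> a \<noteq> b}"
  thus "\<alpha> \<in> monos2 S"
    by (auto simp: monos2_def keys_sq2 keys_pr2 lookup_sq2 lookup_pr2)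
qed

lemma finite_monos2: "finite S \<Longrightarrow> finite (monos2 S)"
  unfolding monos2_char
  by (intro finite_UnI finite_imageI) (auto intro: finite_subset[of _ "S \<times> S"])

lemma monos2_empty: "monos2 {} = {}"
  by (simp add: monos2_char)

lemma monos2_insert:
  assumes "g \<notin> S"
  shows "monos2 (insert g S) = monos2 S \<union> insert (sq2 g) ((\<lambda>b. pr2 g b) ` S)"
  unfolding monos2_char using assms
  by (auto simp: image_iff pr2_comm)

definition mono_val :: "('g \<Rightarrow>\<^sub>0 nat) \<Rightarrow> ('g \<Rightarrow> 'r::comm_ring_1) \<Rightarrow> 'r" where
  "mono_val \<alpha> x = (\<Prod>g\<in>Poly_Mapping.keys \<alpha>. x g ^ Poly_Mapping.lookup \<alpha> g)"

lemma mono_val_sq2: "mono_val (sq2 g) x = x g ^ 2"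
  by (simp add: mono_val_def keys_sq2 lookup_sq2)

lemma mono_val_pr2: "a \<noteq> b \<Longrightarrow> mono_val (pr2 a b) x = x a * x b"
  by (simp add: mono_val_def keys_pr2 lookup_pr2)

definition Lg :: "(('g \<Rightarrow>\<^sub>0 nat) \<Rightarrow> 'r::comm_ring_1) \<Rightarrow> 'g set \<Rightarrow> ('g \<Rightarrow> 'r) \<Rightarrow> 'r" where
  "Lg cc S x = (\<Sum>\<alpha>\<in>monos2 S. cc \<alpha> * mono_val \<alpha> x)"

lemma law_eval_Lg: "law_eval c \<phi> x = Lg (\<phi> \<circ> c) {g. x g \<noteq> 0} x"
  by (simp add: law_eval_def Lg_def mono_val_def)

lemma Lg_empty: "Lg cc {} x = 0"
  by (simp add: Lg_def monos2_empty)

lemma Lg_insert: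
  assumes "finite S" "g \<notin> S"
  shows "Lg cc (insert g S) x = Lg cc S x + cc (sq2 g) * x g ^ 2 + (\<Sum>b\<in>S. cc (pr2 g b) * (x g * x b))"
proof -
  have gk: "\<And>b. b \<in> S \<Longrightarrow> g \<in> Poly_Mapping.keys (pr2 g b)"
    using assms(2) by (subst keys_pr2) auto
  have d1: "monos2 S \<inter> insert (sq2 g) ((\<lambda>b. pr2 g b) ` S) = {}"
    using assms(2) gk by (auto simp: monos2_def keys_sq2)
  have d2: "sq2 g \<notin> (\<lambda>b. pr2 g b) ` S"
  proof
    assume "sq2 g \<in> (\<lambda>b. pr2 g b) ` S"
    then obtain b where "b \<in> S" "sq2 g = pr2 g b" by auto
    hence "Poly_Mapping.lookup (sq2 g) g = Poly_Mapping.lookup (pr2 g b) g" by simp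
    moreover have "g \<noteq> b" using assms(2) \<open>b \<in> S\<close> by auto
    ultimately show False by (simp add: lookup_sq2 lookup_pr2)
  qed
  have inj: "inj_on (\<lambda>b. pr2 g b) S"
  proof (rule inj_onI)
    fix b b' assume "b \<in> S" "b' \<in> S" "pr2 g b = pr2 g b'"
    hence "Poly_Mapping.lookup (pr2 g b) b = Poly_Mapping.lookup (pr2 g b') b" by simp
    moreover have "g \<noteq> b" "g \<noteq> b'" using assms(2) \<open>b \<in> S\<close> \<open>b' \<in> S\<close> by auto
    ultimately show "b = b'" by (simp add: lookup_pr2 split: if_splits)
  qed
  have "Lg cc (insert g S) x = Lg cc S x + (\<Sum>\<alpha>\<in>insert (sq2 g) ((\<lambda>b. pr2 g b) ` S). cc \<alpha> * mono_val \<alpha> x)"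
    unfolding Lg_def monos2_insert[OF assms(2)]
    by (rule sum.union_disjoint) (use assms d1 finite_monos2 in auto)
  also have "(\<Sum>\<alpha>\<in>insert (sq2 g) ((\<lambda>b. pr2 g b) ` S). cc \<alpha> * mono_val \<alpha> x)
      = cc (sq2 g) * x g ^ 2 + (\<Sum>b\<in>S. cc (pr2 g b) * mono_val (pr2 g b) x)"
    using d2 inj assms(1) by (simp add: sum.reindex mono_val_sq2)
  also have "(\<Sum>b\<in>S. cc (pr2 g b) * mono_val (pr2 g b) x) = (\<Sum>b\<in>S. cc (pr2 g b) * (x g * x b))"
  proof (intro sum.cong refl)
    fix b assume "b \<in> S"
    hence "g \<noteq> b" using assms(2) by auto
    thus "cc (pr2 g b) * mono_val (pr2 g b) x = cc (pr2 g b) * (x g * x b)" by (simp add: mono_val_pr2)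
  qed
  finally show ?thesis by (simp add: add.assoc)
qed

lemma Lg_zero_ext:
  assumes "finite S0" "finite E" "\<And>k. k \<in> E \<Longrightarrow> x k = 0"
  shows "Lg cc (S0 \<union> E) x = Lg cc S0 x"
  using assms(2,3)
proof (induction E rule: finite_induct)
  case (insert g E)
  show ?case
  proof (cases "g \<in> S0 \<union> E")
    case True
    hence "S0 \<union> insert g E = S0 \<union> E" by auto
    thus ?thesis using insert by simp
  next
    case False
    have "S0 \<union> insert g E = insert g (S0 \<union> E)" by auto
    thus ?thesis using insert False assms(1) by (simp add: Lg_insert)
  qed
qed simp

definition Dv :: "(('g \<Rightarrow>\<^sub>0 nat) \<Rightarrow> 'r::comm_ring_1) \<Rightarrow> ('g \<Rightarrow> 'r) \<Rightarrow> 'r" where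
  "Dv cc x = Lg cc {k. x k \<noteq> 0} x"

lemma Dv_Lg:
  assumes "finite S" "{k. x k \<noteq> 0} \<subseteq> S"
  shows "Dv cc x = Lg cc S x"
proof -
  have "S = {k. x k \<noteq> 0} \<union> (S - {k. x k \<noteq> 0})" using assms by auto
  hence "Lg cc S x = Lg cc {k. x k \<noteq> 0} x"
    using Lg_zero_ext[of "{k. x k \<noteq> 0}" "S - {k. x k \<noteq> 0}" x cc] assms
    by (metis (mono_tags, lifting) Diff_iff finite_Diff finite_subset mem_Collect_eq)
  thus ?thesis by (simp add: Dv_def)
qed

lemma law_eval_Dv: "law_eval c \<phi> x = Dv (\<phi> \<circ> c) x"
  by (simp add: law_eval_Lg Dv_def)

definition bet :: "(('g \<Rightarrow>\<^sub>0 nat) \<Rightarrow> 'r::comm_ring_1) \<Rightarrow> 'g \<Rightarrow> 'g \<Rightarrow> 'r" where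
  "bet cc a b = (if a = b then 2 * cc (sq2 a) else cc (pr2 a b))"

lemma bet_comm: "bet cc a b = bet cc b a"
  by (simp add: bet_def pr2_comm)

definition Bl :: "(('g \<Rightarrow>\<^sub>0 nat) \<Rightarrow> 'r::comm_ring_1) \<Rightarrow> 'g set \<Rightarrow> ('g \<Rightarrow> 'r) \<Rightarrow> ('g \<Rightarrow> 'r) \<Rightarrow> 'r" where
  "Bl cc S u v = (\<Sum>a\<in>S. \<Sum>b\<in>S. u a * v b * bet cc a b)"

lemma Lg_polar:
  assumes "finite S"
  shows "Lg cc S (\<lambda>k. u k + v k) = Lg cc S u + Lg cc S v + Bl cc S u v"
  using assms
proof (induction S rule: finite_induct)
  case empty
  then show ?case by (simp add: Lg_empty Bl_def)
next
  case (insert g F)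
  have bg: "\<And>b. b \<in> F \<Longrightarrow> bet cc g b = cc (pr2 g b) \<and> bet cc b g = cc (pr2 g b)"
    using insert(2) by (auto simp: bet_def pr2_comm)
  have B: "Bl cc (insert g F) u v = Bl cc F u v + u g * v g * (2 * cc (sq2 g))
     + (\<Sum>b\<in>F. cc (pr2 g b) * (u g * v b + u b * v g))"
  proof -
    have "Bl cc (insert g F) u v = (\<Sum>b\<in>insert g F. u g * v b * bet cc g b)
        + (\<Sum>a\<in>F. \<Sum>b\<in>insert g F. u a * v b * bet cc a b)"
      unfolding Bl_def using insert(1,2) by simp
    also have "(\<Sum>b\<in>insert g F. u g * v b * bet cc g b) = u g * v g * (2 * cc (sq2 g))
        + (\<Sum>b\<in>F. u g * v b * cc (pr2 g b))"
      using insert(1,2) bg by (simp add: bet_def)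
    also have "(\<Sum>a\<in>F. \<Sum>b\<in>insert g F. u a * v b * bet cc a b)
        = (\<Sum>a\<in>F. u a * v g * cc (pr2 g a)) + Bl cc F u v"
      unfolding Bl_def using insert(1,2) bg by (simp add: sum.distrib)
    finally show ?thesis
      by (simp add: sum.distrib algebra_simps)
  qed
  show ?case
    unfolding Lg_insert[OF insert(1,2)] insert.IH B
    by (simp add: sum.distrib algebra_simps power2_eq_square)
qed

lemma Lg_scale:
  "Lg cc S (\<lambda>k. c * x k) = c ^ 2 * Lg cc S x"
proof -
  have "\<And>\<alpha>. \<alpha> \<in> monos2 S \<Longrightarrow> mono_val \<alpha> (\<lambda>k. c * x k) = c ^ 2 * mono_val \<alpha> x"
    by (simp add: mono_val_def power_mult_distrib prod.distrib monos2_def flip: power_sum)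
  thus ?thesis unfolding Lg_def sum_distrib_left
    by (intro sum.cong) (auto simp: algebra_simps)
qed

lemma Dv_add:
  assumes "finite S" "{k. u k \<noteq> 0} \<subseteq> S" "{k. v k \<noteq> 0} \<subseteq> S"
  shows "Dv cc (\<lambda>k. u k + v k) = Dv cc u + Dv cc v + Bl cc S u v"
proof -
  have "{k. u k + v k \<noteq> 0} \<subseteq> S"
  proof
    fix k assume "k \<in> {k. u k + v k \<noteq> 0}"
    hence "u k \<noteq> 0 \<or> v k \<noteq> 0" by auto
    thus "k \<in> S" using assms by auto
  qed
  thus ?thesis using assms by (simp add: Dv_Lg[of S] Lg_polar)
qed

lemma Dv_scale:
  assumes "finite {k. x k \<noteq> 0}"
  shows "Dv cc (\<lambda>k. c * x k) = c ^ 2 * Dv cc x"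
proof -
  have "{k. c * x k \<noteq> 0} \<subseteq> {k. x k \<noteq> 0}" by auto
  thus ?thesis using assms by (simp add: Dv_Lg[of "{k. x k \<noteq> 0}"] Lg_scale)
qed

lemma Dv_delta: "Dv cc (\<lambda>k. if k = g then c else 0) = c ^ 2 * cc (sq2 g)"
proof -
  have "Dv cc (\<lambda>k. if k = g then c else 0) = Lg cc (insert g {}) (\<lambda>k. if k = g then c else 0)"
    by (rule Dv_Lg) auto
  also have "\<dots> = c ^ 2 * cc (sq2 g)"
    by (subst Lg_insert) (auto simp: Lg_empty)
  finally show ?thesis .
qed

lemma Dv_zero: "Dv cc (\<lambda>k. 0) = 0"
  by (simp add: Dv_def Lg_def monos2_empty)

lemma Bl_delta_right:
  assumes "finite S" "l \<in> S"
  shows "Bl cc S u (\<lambda>k. if k = l then c else 0) = c * (\<Sum>k\<in>S. u k * bet cc k l)"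
proof -
  have "\<And>a. (\<Sum>b\<in>S. u a * (if b = l then c else 0) * bet cc a b) = (\<Sum>b\<in>S. if b = l then u a * c * bet cc a l else 0)"
    by (intro sum.cong) auto
  hence "Bl cc S u (\<lambda>k. if k = l then c else 0) = (\<Sum>a\<in>S. u a * c * bet cc a l)"
    unfolding Bl_def using assms by simp
  thus ?thesis by (simp add: sum_distrib_left algebra_simps)
qed

lemma Bl_mono:
  assumes "finite S'" "S \<subseteq> S'" "{k. u k \<noteq> 0} \<subseteq> S" "{k. v k \<noteq> 0} \<subseteq> S"
  shows "Bl cc S' u v = Bl cc S u v"
proof -
  have fS: "finite S" using assms(1,2) finite_subset by blast
  have u0: "\<And>a. a \<notin> S \<Longrightarrow> u a = 0" and v0: "\<And>a. a \<notin> S \<Longrightarrow> v a = 0" using assms by auto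
  have "Bl cc S' u v = (\<Sum>a\<in>S. \<Sum>b\<in>S'. u a * v b * bet cc a b)"
    unfolding Bl_def using assms by (intro sum.mono_neutral_right) (auto simp: u0)
  also have "\<dots> = Bl cc S u v"
    unfolding Bl_def using assms by (intro sum.cong refl sum.mono_neutral_right) (auto simp: v0)
  finally show ?thesis .
qed

lemma Bl_sym: "Bl cc S u v = Bl cc S v u"
  unfolding Bl_def by (subst sum.swap) (simp add: bet_comm mult.commute mult.left_commute)

lemma Dv_two_deltas:
  "Dv cc (\<lambda>k. (if k = a then p else 0) + (if k = b then q else 0))
     = p ^ 2 * cc (sq2 a) + q ^ 2 * cc (sq2 b) + p * q * bet cc a b"
proof -
  have "Dv cc (\<lambda>k. (if k = a then p else 0) + (if k = b then q else 0))
      = Dv cc (\<lambda>k. if k = a then p else 0) + Dv cc (\<lambda>k. if k = b then q else 0)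
        + Bl cc {a, b} (\<lambda>k. if k = a then p else 0) (\<lambda>k. if k = b then q else 0)"
    by (rule Dv_add) auto
  also have "Bl cc {a, b} (\<lambda>k. if k = a then p else 0) (\<lambda>k. if k = b then q else 0) = p * q * bet cc a b"
    by (subst Bl_delta_right) (cases "a = b"; simp add: algebra_simps)+
  finally show ?thesis by (simp add: Dv_delta)
qed

definition pf :: "('g \<Rightarrow> 'g) \<Rightarrow> ('g \<Rightarrow> 'r::comm_ring_1) \<Rightarrow> 'g set \<Rightarrow> 'g \<Rightarrow> 'r" where
  "pf f y B = (\<lambda>k. \<Sum>b\<in>B. if f b = k then y b else 0)"

lemma pf_supp: "{k. pf f y B k \<noteq> 0} \<subseteq> f ` B"
proof
  fix k assume "k \<in> {k. pf f y B k \<noteq> 0}"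
  hence "(\<Sum>b\<in>B. if f b = k then y b else 0) \<noteq> 0" by (simp add: pf_def)
  then obtain b where "b \<in> B" "(if f b = k then y b else 0) \<noteq> 0"
    using sum.not_neutral_contains_not_neutral by blast
  thus "k \<in> f ` B" by (auto split: if_splits)
qed

lemma pf_sum:
  assumes "finite S" "finite B" "f ` B \<subseteq> S"
  shows "(\<Sum>k\<in>S. pf f y B k * F k) = (\<Sum>b\<in>B. y b * F (f b))"
proof -
  have "(\<Sum>k\<in>S. pf f y B k * F k) = (\<Sum>k\<in>S. \<Sum>b\<in>B. if f b = k then y b * F k else 0)"
    unfolding pf_def sum_distrib_right by (intro sum.cong refl) auto
  also have "\<dots> = (\<Sum>b\<in>B. \<Sum>k\<in>S. if f b = k then y b * F k else 0)"
    by (rule sum.swap)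
  also have "\<dots> = (\<Sum>b\<in>B. y b * F (f b))"
    using assms by (intro sum.cong refl) (auto simp: sum.delta)
  finally show ?thesis .
qed

lemma sym_sum_char2:
  fixes y :: "'g \<Rightarrow> 'r::comm_ring_1"
  assumes "(2::'r) = 0" "finite B" "\<And>b c. b \<in> B \<Longrightarrow> c \<in> B \<Longrightarrow> f b c = f c b"
  shows "(\<Sum>b\<in>B. \<Sum>c\<in>B. y b * y c * f b c) = (\<Sum>b\<in>B. y b ^ 2 * f b b)"
  using assms(2,3)
proof (induction B rule: finite_induct)
  case (insert h F)
  have X: "(\<Sum>b\<in>F. y b * y h * f b h) = (\<Sum>c\<in>F. y h * y c * f h c)"
    using insert.prems by (intro sum.cong refl) (auto simp: algebra_simps)
  have Z: "(\<Sum>c\<in>F. y h * y c * f h c) + (\<Sum>c\<in>F. y h * y c * f h c) = 0"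
  proof -
    have "(\<Sum>c\<in>F. y h * y c * f h c) + (\<Sum>c\<in>F. y h * y c * f h c) = 2 * (\<Sum>c\<in>F. y h * y c * f h c)"
      by simp
    thus ?thesis using assms(1) by simp
  qed
  have "(\<Sum>b\<in>insert h F. \<Sum>c\<in>insert h F. y b * y c * f b c)
     = y h * y h * f h h + (\<Sum>c\<in>F. y h * y c * f h c)
       + ((\<Sum>b\<in>F. y b * y h * f b h) + (\<Sum>b\<in>F. \<Sum>c\<in>F. y b * y c * f b c))"
    using insert.hyps by (simp add: sum.distrib)
  also have "\<dots> = y h * y h * f h h + (\<Sum>b\<in>F. \<Sum>c\<in>F. y b * y c * f b c)"
    unfolding X using Z by (simp add: algebra_simps)
  finally show ?case using insert by (simp add: power2_eq_square)
qed simp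

definition gm :: "('g, 'b) monoid_scheme \<Rightarrow> 'g set \<Rightarrow> 'g set \<Rightarrow> ('g \<Rightarrow> 'r::comm_ring_1) \<Rightarrow> ('g \<Rightarrow> 'r) \<Rightarrow> 'g \<Rightarrow> 'r" where
  "gm G A B x y = (\<lambda>k. \<Sum>g\<in>A. x g * pf (\<lambda>h. g \<otimes>\<^bsub>G\<^esub> h) y B k)"

lemma galg_mult_gm:
  assumes "finite A" "finite B" "{k. x k \<noteq> 0} \<subseteq> A" "{k. y k \<noteq> 0} \<subseteq> B"
  shows "galg_mult G x y = gm G A B x y"
proof
  fix k
  let ?P = "{(g, h). x g \<noteq> 0 \<and> y h \<noteq> 0 \<and> g \<otimes>\<^bsub>G\<^esub> h = k}"
  have "gm G A B x y k = (\<Sum>g\<in>A. \<Sum>h\<in>B. if g \<otimes>\<^bsub>G\<^esub> h = k then x g * y h else 0)"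
    unfolding gm_def pf_def sum_distrib_left by (intro sum.cong refl) auto
  also have "\<dots> = (\<Sum>p\<in>A \<times> B. if fst p \<otimes>\<^bsub>G\<^esub> snd p = k then x (fst p) * y (snd p) else 0)"
    by (simp add: sum.cartesian_product case_prod_beta)
  also have "\<dots> = (\<Sum>p\<in>?P. x (fst p) * y (snd p))"
  proof (rule sum.mono_neutral_cong_right)
    show "finite (A \<times> B)" using assms by simp
    show "?P \<subseteq> A \<times> B" using assms by auto
    show "\<forall>p\<in>A \<times> B - ?P. (if fst p \<otimes>\<^bsub>G\<^esub> snd p = k then x (fst p) * y (snd p) else 0) = 0"
      by auto
    show "\<And>p. p \<in> ?P \<Longrightarrow> (if fst p \<otimes>\<^bsub>G\<^esub> snd p = k then x (fst p) * y (snd p) else 0) = x (fst p) * y (snd p)"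
      by auto
  qed
  also have "\<dots> = galg_mult G x y k"
    by (simp add: galg_mult_def case_prod_beta)
  finally show "galg_mult G x y k = gm G A B x y k" ..
qed

lemma gm_supp: "{k. gm G A B x y k \<noteq> 0} \<subseteq> (\<lambda>p. fst p \<otimes>\<^bsub>G\<^esub> snd p) ` (A \<times> B)"
proof
  fix k assume "k \<in> {k. gm G A B x y k \<noteq> 0}"
  hence "(\<Sum>g\<in>A. x g * pf (\<lambda>h. g \<otimes>\<^bsub>G\<^esub> h) y B k) \<noteq> 0" by (simp add: gm_def)
  then obtain g where g: "g \<in> A" "x g * pf (\<lambda>h. g \<otimes>\<^bsub>G\<^esub> h) y B k \<noteq> 0"
    using sum.not_neutral_contains_not_neutral by blast
  hence "pf (\<lambda>h. g \<otimes>\<^bsub>G\<^esub> h) y B k \<noteq> 0" by (metis mult_zero_right)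
  hence "k \<in> (\<lambda>h. g \<otimes>\<^bsub>G\<^esub> h) ` B" by (intro subsetD[OF pf_supp]) simp
  then obtain h where h: "h \<in> B" "k = g \<otimes>\<^bsub>G\<^esub> h" by blast
  show "k \<in> (\<lambda>p. fst p \<otimes>\<^bsub>G\<^esub> snd p) ` (A \<times> B)"
    by (rule image_eqI[where x="(g, h)"]) (use g(1) h in simp_all)
qed

lemma Bl_lin:
  "Bl cc S (\<lambda>k. \<Sum>a\<in>F. c a * P a k) (\<lambda>k. d * Q k) = (\<Sum>a\<in>F. c a * d * Bl cc S (P a) Q)"
proof -
  have "Bl cc S (\<lambda>k. \<Sum>a\<in>F. c a * P a k) (\<lambda>k. d * Q k)
      = (\<Sum>k\<in>S. \<Sum>l\<in>S. \<Sum>a\<in>F. c a * d * (P a k * Q l * bet cc k l))"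
  proof -
    have "\<And>k l. (\<Sum>a\<in>F. c a * P a k) * (d * Q l) * bet cc k l = (\<Sum>a\<in>F. c a * d * (P a k * Q l * bet cc k l))"
    proof -
      fix k l
      have "(\<Sum>a\<in>F. c a * P a k) * (d * Q l) * bet cc k l = (\<Sum>a\<in>F. c a * P a k * (d * Q l) * bet cc k l)"
        by (simp only: sum_distrib_right)
      also have "\<dots> = (\<Sum>a\<in>F. c a * d * (P a k * Q l * bet cc k l))"
        by (rule sum.cong) (simp_all add: mult_ac)
      finally show "?thesis k l" .
    qed
    thus ?thesis unfolding Bl_def by simp
  qed
  also have "\<dots> = (\<Sum>k\<in>S. \<Sum>a\<in>F. \<Sum>l\<in>S. c a * d * (P a k * Q l * bet cc k l))"
    by (intro sum.cong refl sum.swap)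
  also have "\<dots> = (\<Sum>a\<in>F. \<Sum>k\<in>S. \<Sum>l\<in>S. c a * d * (P a k * Q l * bet cc k l))"
    by (rule sum.swap)
  also have "\<dots> = (\<Sum>a\<in>F. c a * d * Bl cc S (P a) Q)"
    unfolding Bl_def by (simp add: sum_distrib_left)
  finally show ?thesis .
qed

locale tdet = group G for G :: "('g, 'b) monoid_scheme" (structure) +
  fixes cc :: "('g \<Rightarrow>\<^sub>0 nat) \<Rightarrow> 'r::comm_ring_1" and e :: 'r and \<tau> :: "'g \<Rightarrow> 'r"
  assumes two: "(2::'r) = 0" and ee: "e * e = 0"
  and sqmult: "g \<in> carrier G \<Longrightarrow> h \<in> carrier G \<Longrightarrow> cc (sq2 (g \<otimes> h)) = cc (sq2 g) * cc (sq2 h)"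
  and esq: "g \<in> carrier G \<Longrightarrow> e * cc (sq2 g) = e"
  and bet_tau: "a \<in> carrier G \<Longrightarrow> b \<in> carrier G \<Longrightarrow> bet cc a b = e * \<tau> (inv a \<otimes> b)"
  and tau_sym: "b \<in> carrier G \<Longrightarrow> c \<in> carrier G \<Longrightarrow> k \<in> carrier G \<Longrightarrow> \<tau> (inv b \<otimes> k \<otimes> c) = \<tau> (inv c \<otimes> k \<otimes> b)"
  and tau_conj: "b \<in> carrier G \<Longrightarrow> k \<in> carrier G \<Longrightarrow> \<tau> (inv b \<otimes> k \<otimes> b) = \<tau> k"
begin

lemma e_Lg:
  assumes "finite B" "B \<subseteq> carrier G"
  shows "e * Lg cc B y = e * (\<Sum>b\<in>B. y b ^ 2)"
  using assms
proof (induction B rule: finite_induct)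
  case empty
  then show ?case by (simp add: Lg_empty)
next
  case (insert h F)
  have z: "\<And>b. b \<in> F \<Longrightarrow> e * cc (pr2 h b) = 0"
  proof -
    fix b assume "b \<in> F"
    hence "h \<noteq> b" "b \<in> carrier G" "h \<in> carrier G" using insert by auto
    hence "cc (pr2 h b) = e * \<tau> (inv h \<otimes> b)" using bet_tau[of h b] by (simp add: bet_def)
    thus "e * cc (pr2 h b) = 0" by (simp add: ee mult.assoc[symmetric])
  qed
  have "e * Lg cc (insert h F) y = e * Lg cc F y + e * cc (sq2 h) * y h ^ 2 + (\<Sum>b\<in>F. e * cc (pr2 h b) * (y h * y b))"
    using insert by (simp add: Lg_insert algebra_simps sum_distrib_left)
  also have "\<dots> = e * Lg cc F y + e * y h ^ 2"
    using insert by (simp add: z esq)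
  finally show ?case using insert by (simp add: algebra_simps)
qed

lemma bet_Dv:
  assumes "a \<in> carrier G" "g \<in> carrier G" "finite B" "B \<subseteq> carrier G" "{k. y k \<noteq> 0} \<subseteq> B"
  shows "bet cc a g * Dv cc y = bet cc a g * (\<Sum>b\<in>B. y b ^ 2)"
proof -
  have "e * Dv cc y = e * (\<Sum>b\<in>B. y b ^ 2)"
    using assms by (simp add: Dv_Lg[of B] e_Lg)
  have "bet cc a g * Dv cc y = \<tau> (inv a \<otimes> g) * (e * Dv cc y)"
    using assms by (simp add: bet_tau mult_ac)
  also have "\<dots> = \<tau> (inv a \<otimes> g) * (e * (\<Sum>b\<in>B. y b ^ 2))"
    using \<open>e * Dv cc y = _\<close> by simp
  also have "\<dots> = bet cc a g * (\<Sum>b\<in>B. y b ^ 2)"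
    using assms by (simp add: bet_tau mult_ac)
  finally show ?thesis .
qed

lemma sq_bet:
  assumes "g \<in> carrier G" "a \<in> carrier G" "b \<in> carrier G"
  shows "cc (sq2 g) * bet cc a b = bet cc a b"
proof -
  have "cc (sq2 g) * bet cc a b = \<tau> (inv a \<otimes> b) * (e * cc (sq2 g))"
    using assms by (simp add: bet_tau mult_ac)
  thus ?thesis using assms by (simp add: esq bet_tau mult_ac)
qed

lemma cancel_l: "x \<in> carrier G \<Longrightarrow> y \<in> carrier G \<Longrightarrow> inv x \<otimes> (x \<otimes> y) = y"
  by (simp add: m_assoc[symmetric])

lemma cancel_r: "x \<in> carrier G \<Longrightarrow> y \<in> carrier G \<Longrightarrow> x \<otimes> (inv x \<otimes> y) = y"
  by (simp add: m_assoc[symmetric])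

lemma bet_transl:
  assumes "g \<in> carrier G" "a \<in> carrier G" "b \<in> carrier G"
  shows "bet cc (g \<otimes> a) (g \<otimes> b) = bet cc a b"
  using assms by (simp add: bet_tau inv_mult_group m_assoc cancel_l)

lemma transl_Dv:
  assumes "g \<in> carrier G" "finite B" "B \<subseteq> carrier G" "{k. y k \<noteq> 0} \<subseteq> B"
  shows "Dv cc (pf (\<lambda>h. g \<otimes> h) y B) = cc (sq2 g) * Dv cc y"
  using assms(2-4)
proof (induction B arbitrary: y rule: finite_induct)
  case empty
  hence "\<And>k. y k = 0" by auto
  hence "y = (\<lambda>k. 0)" by (simp add: fun_eq_iff)
  moreover have "pf (\<lambda>h. g \<otimes> h) y {} = (\<lambda>k. 0)" by (simp add: pf_def)
  ultimately show ?case by (simp add: Dv_zero)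
next
  case (insert h F y)
  define y' where "y' = (\<lambda>k. if k = h then 0 else y k)"
  have hc: "h \<in> carrier G" "F \<subseteq> carrier G" using insert by auto
  have sy': "{k. y' k \<noteq> 0} \<subseteq> F" using insert.prems by (auto simp: y'_def)
  have yeq: "y = (\<lambda>k. y' k + (if k = h then y h else 0))"
    by (auto simp: y'_def)
  have pfeq: "pf (\<lambda>b. g \<otimes> b) y (insert h F) = (\<lambda>k. pf (\<lambda>b. g \<otimes> b) y' F k + (if k = g \<otimes> h then y h else 0))"
  proof
    fix k
    have "pf (\<lambda>b. g \<otimes> b) y F k = pf (\<lambda>b. g \<otimes> b) y' F k"
      unfolding pf_def y'_def using insert.hyps by (intro sum.cong) auto
    moreover have "pf (\<lambda>b. g \<otimes> b) y (insert h F) k = (if g \<otimes> h = k then y h else 0) + pf (\<lambda>b. g \<otimes> b) y F k"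
      using insert.hyps by (simp add: pf_def)
    moreover have "(if g \<otimes> h = k then y h else 0) = (if k = g \<otimes> h then y h else (0::'r))" by auto
    ultimately show "pf (\<lambda>b. g \<otimes> b) y (insert h F) k = pf (\<lambda>b. g \<otimes> b) y' F k + (if k = g \<otimes> h then y h else 0)"
      by (simp add: add.commute)
  qed
  let ?S = "(\<lambda>b. g \<otimes> b) ` insert h F"
  have fS: "finite ?S" using insert by simp
  have s1: "{k. pf (\<lambda>b. g \<otimes> b) y' F k \<noteq> 0} \<subseteq> ?S" by (rule order_trans[OF pf_supp]) auto
  have s2: "{k. (if k = g \<otimes> h then y h else 0) \<noteq> 0} \<subseteq> ?S" by auto
  have "Dv cc (pf (\<lambda>b. g \<otimes> b) y (insert h F)) = Dv cc (pf (\<lambda>b. g \<otimes> b) y' F)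
      + Dv cc (\<lambda>k. if k = g \<otimes> h then y h else 0)
      + Bl cc ?S (pf (\<lambda>b. g \<otimes> b) y' F) (\<lambda>k. if k = g \<otimes> h then y h else 0)"
    unfolding pfeq by (rule Dv_add[OF fS s1 s2])
  also have "Bl cc ?S (pf (\<lambda>b. g \<otimes> b) y' F) (\<lambda>k. if k = g \<otimes> h then y h else 0)
      = y h * (\<Sum>b\<in>F. y' b * bet cc b h)"
  proof -
    have "Bl cc ?S (pf (\<lambda>b. g \<otimes> b) y' F) (\<lambda>k. if k = g \<otimes> h then y h else 0)
        = y h * (\<Sum>k\<in>?S. pf (\<lambda>b. g \<otimes> b) y' F k * bet cc k (g \<otimes> h))"
      by (rule Bl_delta_right[OF fS]) auto
    also have "(\<Sum>k\<in>?S. pf (\<lambda>b. g \<otimes> b) y' F k * bet cc k (g \<otimes> h)) = (\<Sum>b\<in>F. y' b * bet cc (g \<otimes> b) (g \<otimes> h))"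
      by (rule pf_sum[OF fS]) (use insert in auto)
    also have "\<dots> = (\<Sum>b\<in>F. y' b * bet cc b h)"
      using hc assms(1) by (intro sum.cong refl) (auto simp: bet_transl)
    finally show ?thesis .
  qed
  also have "Dv cc (pf (\<lambda>b. g \<otimes> b) y' F) = cc (sq2 g) * Dv cc y'"
    using insert.IH[OF hc(2) sy'] .
  also have "Dv cc (\<lambda>k. if k = g \<otimes> h then y h else 0) = y h ^ 2 * (cc (sq2 g) * cc (sq2 h))"
    using hc assms(1) by (simp add: Dv_delta sqmult)
  finally have L: "Dv cc (pf (\<lambda>b. g \<otimes> b) y (insert h F)) = cc (sq2 g) * Dv cc y' + y h ^ 2 * (cc (sq2 g) * cc (sq2 h))
      + y h * (\<Sum>b\<in>F. y' b * bet cc b h)" .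
  have "Dv cc y = Dv cc y' + Dv cc (\<lambda>k. if k = h then y h else 0)
      + Bl cc (insert h F) y' (\<lambda>k. if k = h then y h else 0)"
    by (subst yeq, rule Dv_add) (use insert sy' in auto)
  also have "Bl cc (insert h F) y' (\<lambda>k. if k = h then y h else 0) = y h * (\<Sum>b\<in>F. y' b * bet cc b h)"
    using insert.hyps by (subst Bl_delta_right) (auto simp: y'_def)
  finally have R: "Dv cc y = Dv cc y' + y h ^ 2 * cc (sq2 h) + y h * (\<Sum>b\<in>F. y' b * bet cc b h)"
    by (simp add: Dv_delta)
  have "cc (sq2 g) * (\<Sum>b\<in>F. y' b * bet cc b h) = (\<Sum>b\<in>F. y' b * bet cc b h)"
    unfolding sum_distrib_left using hc assms(1)
    by (intro sum.cong refl) (auto simp: mult.left_commute[of "cc _"] sq_bet)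
  thus ?case unfolding L R by (simp add: algebra_simps)
qed


lemma cross_Bl:
  assumes "a \<in> carrier G" "g \<in> carrier G" "finite B" "B \<subseteq> carrier G" "finite S"
    "(\<lambda>h. a \<otimes> h) ` B \<subseteq> S" "(\<lambda>h. g \<otimes> h) ` B \<subseteq> S"
  shows "Bl cc S (pf (\<lambda>h. a \<otimes> h) y B) (pf (\<lambda>h. g \<otimes> h) y B) = bet cc a g * (\<Sum>b\<in>B. y b ^ 2)"
proof -
  let ?P = "pf (\<lambda>h. a \<otimes> h) y B" and ?Q = "pf (\<lambda>h. g \<otimes> h) y B"
  have "Bl cc S ?P ?Q = (\<Sum>k\<in>S. ?P k * (\<Sum>l\<in>S. ?Q l * bet cc k l))"
    unfolding Bl_def by (intro sum.cong refl) (simp add: sum_distrib_left mult.assoc)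
  also have "\<dots> = (\<Sum>k\<in>S. ?P k * (\<Sum>c\<in>B. y c * bet cc k (g \<otimes> c)))"
    by (intro sum.cong refl arg_cong[where f="\<lambda>z. _ * z"] pf_sum) (use assms in auto)
  also have "\<dots> = (\<Sum>b\<in>B. y b * (\<Sum>c\<in>B. y c * bet cc (a \<otimes> b) (g \<otimes> c)))"
    by (rule pf_sum) (use assms in auto)
  also have "\<dots> = (\<Sum>b\<in>B. \<Sum>c\<in>B. y b * y c * (e * \<tau> (inv b \<otimes> (inv a \<otimes> g) \<otimes> c)))"
  proof (intro sum.cong refl)
    fix b assume b: "b \<in> B"
    have "y b * (\<Sum>c\<in>B. y c * bet cc (a \<otimes> b) (g \<otimes> c)) = (\<Sum>c\<in>B. y b * (y c * bet cc (a \<otimes> b) (g \<otimes> c)))"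
      by (simp add: sum_distrib_left)
    also have "\<dots> = (\<Sum>c\<in>B. y b * y c * (e * \<tau> (inv b \<otimes> (inv a \<otimes> g) \<otimes> c)))"
    proof (intro sum.cong refl)
      fix c assume c: "c \<in> B"
      have bc: "b \<in> carrier G" "c \<in> carrier G" using assms b c by auto
      have "inv (a \<otimes> b) \<otimes> (g \<otimes> c) = inv b \<otimes> (inv a \<otimes> g) \<otimes> c"
        using assms bc by (simp add: inv_mult_group m_assoc)
      moreover have "bet cc (a \<otimes> b) (g \<otimes> c) = e * \<tau> (inv (a \<otimes> b) \<otimes> (g \<otimes> c))"
        using assms bc by (simp add: bet_tau)
      ultimately show "y b * (y c * bet cc (a \<otimes> b) (g \<otimes> c)) = y b * y c * (e * \<tau> (inv b \<otimes> (inv a \<otimes> g) \<otimes> c))"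
        by (simp add: mult.assoc)
    qed
    finally show "y b * (\<Sum>c\<in>B. y c * bet cc (a \<otimes> b) (g \<otimes> c)) = (\<Sum>c\<in>B. y b * y c * (e * \<tau> (inv b \<otimes> (inv a \<otimes> g) \<otimes> c)))" .
  qed
  also have "\<dots> = (\<Sum>b\<in>B. y b ^ 2 * (e * \<tau> (inv b \<otimes> (inv a \<otimes> g) \<otimes> b)))"
  proof (rule sym_sum_char2[OF two assms(3)])
    fix b c assume "b \<in> B" "c \<in> B"
    hence "b \<in> carrier G" "c \<in> carrier G" using assms by auto
    thus "e * \<tau> (inv b \<otimes> (inv a \<otimes> g) \<otimes> c) = e * \<tau> (inv c \<otimes> (inv a \<otimes> g) \<otimes> b)"
      using assms by (simp add: tau_sym)
  qed
  also have "\<dots> = (\<Sum>b\<in>B. y b ^ 2 * bet cc a g)"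
  proof (intro sum.cong refl)
    fix b assume "b \<in> B"
    hence "b \<in> carrier G" using assms by auto
    thus "y b ^ 2 * (e * \<tau> (inv b \<otimes> (inv a \<otimes> g) \<otimes> b)) = y b ^ 2 * bet cc a g"
      using assms by (simp add: tau_conj bet_tau)
  qed
  finally show ?thesis by (simp add: sum_distrib_left mult.commute)
qed

lemma gm_Dv:
  assumes "finite A" "A \<subseteq> carrier G" "finite B" "B \<subseteq> carrier G" "{k. x k \<noteq> 0} \<subseteq> A" "{k. y k \<noteq> 0} \<subseteq> B"
  shows "Dv cc (gm G A B x y) = Dv cc x * Dv cc y"
  using assms(1,2,5)
proof (induction A arbitrary: x rule: finite_induct)
  case empty
  hence "\<And>k. x k = 0" by auto
  hence "x = (\<lambda>k. 0)" by (simp add: fun_eq_iff)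
  moreover have "gm G {} B x y = (\<lambda>k. 0)" by (simp add: gm_def)
  ultimately show ?case by (simp add: Dv_zero)
next
  case (insert g F x)
  define x' where "x' = (\<lambda>k. if k = g then 0 else x k)"
  have hc: "g \<in> carrier G" "F \<subseteq> carrier G" using insert by auto
  have sx': "{k. x' k \<noteq> 0} \<subseteq> F" using insert.prems by (auto simp: x'_def)
  have xeq: "x = (\<lambda>k. x' k + (if k = g then x g else 0))"
    by (auto simp: x'_def)
  let ?Q = "pf (\<lambda>h. g \<otimes> h) y B"
  have gmeq: "gm G (insert g F) B x y = (\<lambda>k. gm G F B x' y k + x g * ?Q k)"
  proof
    fix k
    have "gm G F B x y k = gm G F B x' y k"
      unfolding gm_def x'_def using insert.hyps by (intro sum.cong) auto
    thus "gm G (insert g F) B x y k = gm G F B x' y k + x g * ?Q k"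
      using insert.hyps by (simp add: gm_def add.commute)
  qed
  let ?S = "(\<lambda>p. fst p \<otimes> snd p) ` (insert g F \<times> B)"
  have fS: "finite ?S" using insert assms(3) by simp
  have s1: "{k. gm G F B x' y k \<noteq> 0} \<subseteq> ?S" by (rule order_trans[OF gm_supp]) auto
  have sQ: "{k. ?Q k \<noteq> 0} \<subseteq> (\<lambda>h. g \<otimes> h) ` B" by (rule pf_supp)
  have s2: "{k. x g * ?Q k \<noteq> 0} \<subseteq> ?S"
  proof
    fix k assume "k \<in> {k. x g * ?Q k \<noteq> 0}"
    hence "?Q k \<noteq> 0" by (metis (mono_tags, lifting) mem_Collect_eq mult_zero_right)
    hence "k \<in> (\<lambda>h. g \<otimes> h) ` B" by (intro subsetD[OF sQ]) simp
    then obtain h where h: "h \<in> B" "k = g \<otimes> h" by blast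
    show "k \<in> ?S" by (rule image_eqI[where x="(g, h)"]) (use h in simp_all)
  qed
  have subS: "\<And>a. a \<in> insert g F \<Longrightarrow> (\<lambda>h. a \<otimes> h) ` B \<subseteq> ?S"
  proof
    fix a k assume a: "a \<in> insert g F" and "k \<in> (\<lambda>h. a \<otimes> h) ` B"
    then obtain h where h: "h \<in> B" "k = a \<otimes> h" by blast
    show "k \<in> ?S" by (rule image_eqI[where x="(a, h)"]) (use a h in simp_all)
  qed
  have "Dv cc (gm G (insert g F) B x y) = Dv cc (gm G F B x' y) + Dv cc (\<lambda>k. x g * ?Q k)
      + Bl cc ?S (gm G F B x' y) (\<lambda>k. x g * ?Q k)"
    unfolding gmeq by (rule Dv_add[OF fS s1 s2])
  also have "Dv cc (gm G F B x' y) = Dv cc x' * Dv cc y"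
    using insert.IH[OF hc(2) sx'] .
  also have "Dv cc (\<lambda>k. x g * ?Q k) = x g ^ 2 * (cc (sq2 g) * Dv cc y)"
  proof -
    have "finite {k. ?Q k \<noteq> 0}" using sQ assms(3) finite_subset by blast
    thus ?thesis using transl_Dv[OF hc(1) assms(3,4,6)] by (simp add: Dv_scale)
  qed
  also have "Bl cc ?S (gm G F B x' y) (\<lambda>k. x g * ?Q k)
      = (\<Sum>a\<in>F. x' a * x g * (bet cc a g * (\<Sum>b\<in>B. y b ^ 2)))"
  proof -
    have "gm G F B x' y = (\<lambda>k. \<Sum>a\<in>F. x' a * pf (\<lambda>h. a \<otimes> h) y B k)" by (simp add: gm_def)
    hence "Bl cc ?S (gm G F B x' y) (\<lambda>k. x g * ?Q k) = (\<Sum>a\<in>F. x' a * x g * Bl cc ?S (pf (\<lambda>h. a \<otimes> h) y B) ?Q)"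
      by (simp add: Bl_lin)
    also have "\<dots> = (\<Sum>a\<in>F. x' a * x g * (bet cc a g * (\<Sum>b\<in>B. y b ^ 2)))"
    proof (intro sum.cong refl)
      fix a assume a: "a \<in> F"
      have "Bl cc ?S (pf (\<lambda>h. a \<otimes> h) y B) ?Q = bet cc a g * (\<Sum>b\<in>B. y b ^ 2)"
        by (rule cross_Bl) (use a hc assms(3,4) fS subS in auto)
      thus "x' a * x g * Bl cc ?S (pf (\<lambda>h. a \<otimes> h) y B) ?Q = x' a * x g * (bet cc a g * (\<Sum>b\<in>B. y b ^ 2))"
        by simp
    qed
    finally show ?thesis .
  qed
  finally have L: "Dv cc (gm G (insert g F) B x y) = Dv cc x' * Dv cc y + x g ^ 2 * (cc (sq2 g) * Dv cc y)
      + (\<Sum>a\<in>F. x' a * x g * (bet cc a g * (\<Sum>b\<in>B. y b ^ 2)))" .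
  have "Dv cc x = Dv cc x' + Dv cc (\<lambda>k. if k = g then x g else 0)
      + Bl cc (insert g F) x' (\<lambda>k. if k = g then x g else 0)"
    by (subst xeq, rule Dv_add) (use insert sx' in auto)
  also have "Bl cc (insert g F) x' (\<lambda>k. if k = g then x g else 0) = x g * (\<Sum>a\<in>F. x' a * bet cc a g)"
    using insert.hyps by (subst Bl_delta_right) (auto simp: x'_def)
  finally have R: "Dv cc x = Dv cc x' + x g ^ 2 * cc (sq2 g) + x g * (\<Sum>a\<in>F. x' a * bet cc a g)"
    by (simp add: Dv_delta)
  have "x g * (\<Sum>a\<in>F. x' a * bet cc a g) * Dv cc y = (\<Sum>a\<in>F. x' a * x g * (bet cc a g * Dv cc y))"
    by (simp add: sum_distrib_left sum_distrib_right mult_ac)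
  also have "\<dots> = (\<Sum>a\<in>F. x' a * x g * (bet cc a g * (\<Sum>b\<in>B. y b ^ 2)))"
    using hc by (intro sum.cong refl) (auto simp: bet_Dv[OF _ _ assms(3,4,6)])
  finally have X: "x g * (\<Sum>a\<in>F. x' a * bet cc a g) * Dv cc y = (\<Sum>a\<in>F. x' a * x g * (bet cc a g * (\<Sum>b\<in>B. y b ^ 2)))" .
  show ?case unfolding L R using X by (simp add: algebra_simps)
qed

lemma galg_Dv:
  assumes "finite {k. x k \<noteq> 0}" "{k. x k \<noteq> 0} \<subseteq> carrier G"
    "finite {k. y k \<noteq> 0}" "{k. y k \<noteq> 0} \<subseteq> carrier G"
  shows "Dv cc (galg_mult G x y) = Dv cc x * Dv cc y"
proof -
  have "galg_mult G x y = gm G {k. x k \<noteq> 0} {k. y k \<noteq> 0} x y"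
    by (rule galg_mult_gm[OF assms(1,3) order_refl order_refl])
  thus ?thesis using gm_Dv[OF assms(1,2,3,4) order_refl order_refl] by metis
qed

end


section \<open>Dual numbers\<close>

lemma re_add [simp]: "re (x + y) = re x + re y" by (simp add: plus_dual_def)
lemma eps_add [simp]: "eps (x + y) = eps x + eps y" by (simp add: plus_dual_def)
lemma re_mult [simp]: "re (x * y) = re x * re y" by (simp add: times_dual_def)
lemma eps_mult [simp]: "eps (x * y) = re x * eps y + eps x * re y" by (simp add: times_dual_def)
lemma re_zero [simp]: "re 0 = 0" by (simp add: zero_dual_def)
lemma eps_zero [simp]: "eps 0 = 0" by (simp add: zero_dual_def)
lemma re_one [simp]: "re 1 = 1" by (simp add: one_dual_def)
lemma eps_one [simp]: "eps 1 = 0" by (simp add: one_dual_def)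
lemma re_uminus [simp]: "re (- x) = - re x" by (simp add: uminus_dual_def)
lemma eps_uminus [simp]: "eps (- x) = - eps x" by (simp add: uminus_dual_def)
lemma re_minus [simp]: "re (x - y) = re x - re y" by (simp add: minus_dual_def)
lemma eps_minus [simp]: "eps (x - y) = eps x - eps y" by (simp add: minus_dual_def)
lemma re_two [simp]: "re (2 :: 'a::comm_ring_1 dual) = 2"
  by (metis one_add_one re_add re_one)
lemma eps_two [simp]: "eps (2 :: 'a::comm_ring_1 dual) = 0"
  by (metis add_0 one_add_one eps_add eps_one)
lemma dual_eqI: "re x = re y \<Longrightarrow> eps x = eps y \<Longrightarrow> x = y"
  by (rule dual.expand) simp

lemma Dual_zero [simp]: "Dual 0 0 = 0" by (simp add: zero_dual_def)
lemma Dual_one [simp]: "Dual 1 0 = 1" by (simp add: one_dual_def)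

lemma Dual_mult: "Dual a b * Dual c d = Dual (a * c) (a * d + b * c)" by (simp add: times_dual_def)

lemma two_dual: "(2::'a::comm_ring_1) = 0 \<Longrightarrow> (2 :: 'a dual) = 0"
  by (rule dual_eqI) simp_all

lemma det_on_eq: "det_on G c g = c (sq2 g)"
proof -
  have "det_on G c g = Dv (id \<circ> c) (\<lambda>k. if k = g then 1 else 0)"
    by (simp add: det_on_def law_eval_Dv)
  thus ?thesis by (simp add: Dv_delta)
qed

lemma bet_const_poly: "bet (\<lambda>\<alpha>. [:c \<alpha>:]) a b = [:bet c a b:]"
proof -
  have "(2::'a poly) * [:x:] = [:2 * x:]" for x :: 'a
    by (subst numeral_poly) simp
  thus ?thesis by (simp add: bet_def)
qed

lemma det_trace_eq: "det_trace G c g = bet c \<one>\<^bsub>G\<^esub> g"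
proof -
  have x: "(\<lambda>k. (if k = \<one>\<^bsub>G\<^esub> then [:0, 1:] else 0) - (if k = g then 1 else 0))
      = (\<lambda>k. (if k = \<one>\<^bsub>G\<^esub> then [:0, 1:] else 0) + (if k = g then - 1 else (0::'a poly)))"
    by (auto simp: fun_eq_iff)
  have "law_eval c (\<lambda>a. [:a:]) (\<lambda>k. (if k = \<one>\<^bsub>G\<^esub> then [:0, 1:] else 0) - (if k = g then 1 else 0))
      = [:0, 1:] ^ 2 * [:c (sq2 \<one>\<^bsub>G\<^esub>):] + [:c (sq2 g):] - [:0, 1:] * [:bet c \<one>\<^bsub>G\<^esub> g:]"
    unfolding law_eval_Dv x Dv_two_deltas
    by (simp add: o_def bet_const_poly)
  thus ?thesis unfolding det_trace_def by (simp add: power2_eq_square)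
qed


section \<open>Transfer to polynomial coefficients\<close>

definition iota :: "'a::comm_ring_1 dual \<Rightarrow> (('g \<times> bool) \<Rightarrow>\<^sub>0 nat) \<Rightarrow>\<^sub>0 'a dual" where
  "iota = Poly_Mapping.single 0"

lemma iota_add: "iota (a + b) = iota a + iota b" by (simp add: iota_def single_add)
lemma iota_mult: "iota (a * b) = iota a * iota b" by (simp add: iota_def mult_single)
lemma iota_one: "iota 1 = 1" by (simp add: iota_def)
lemma iota_zero: "iota 0 = 0" by (simp add: iota_def)
lemma iota_eq_iff: "iota a = iota b \<longleftrightarrow> a = b"
  by (simp add: iota_def inj_eq[OF inj_single])
lemma iota_eq_0: "iota a = 0 \<longleftrightarrow> a = 0"
  using iota_eq_iff[of a 0] by (simp add: iota_zero)
lemma iota_sum: "iota (sum f A) = (\<Sum>a\<in>A. iota (f a))"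
  by (induction A rule: infinite_finite_induct) (simp_all add: iota_zero iota_add)
lemma iota_prod: "iota (prod f A) = (\<Prod>a\<in>A. iota (f a))"
  by (induction A rule: infinite_finite_induct) (simp_all add: iota_one iota_mult)
lemma iota_power: "iota (a ^ n) = iota a ^ n"
  by (induction n) (simp_all add: iota_one iota_mult)
lemma iota_two: "iota 2 = 2"
  by (metis iota_add iota_one one_add_one)

lemma Dv_iota: "Dv (iota \<circ> c) (iota \<circ> x) = iota (Dv c x)"
proof -
  have s: "{k. (iota \<circ> x) k \<noteq> 0} = {k. x k \<noteq> 0}" by (simp add: iota_eq_0)
  show ?thesis unfolding Dv_def s Lg_def mono_val_def
    by (simp add: iota_sum iota_prod iota_mult iota_power)
qed

lemma galg_mult_iota: "galg_mult G (iota \<circ> x) (iota \<circ> y) = iota \<circ> galg_mult G x y"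
  by (simp add: galg_mult_def fun_eq_iff iota_eq_0 iota_sum iota_mult case_prod_beta)

lemma law_eval_iota: "law_eval c (\<lambda>a. Poly_Mapping.single 0 a) x = Dv (iota \<circ> c) x"
  by (simp add: law_eval_Dv iota_def o_def)

lemma det2_mult:
  fixes c :: "('g \<Rightarrow>\<^sub>0 nat) \<Rightarrow> 'a::comm_ring_1 dual"
  assumes "det2 G c" "finite {k. x k \<noteq> 0}" "{k. x k \<noteq> 0} \<subseteq> carrier G"
    "finite {k. y k \<noteq> 0}" "{k. y k \<noteq> 0} \<subseteq> carrier G"
  shows "Dv c (galg_mult G x y) = Dv c x * Dv c y"
proof -
  let ?x = "(iota :: 'a dual \<Rightarrow> (('g \<times> bool) \<Rightarrow>\<^sub>0 nat) \<Rightarrow>\<^sub>0 'a dual) \<circ> x"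
  let ?y = "(iota :: 'a dual \<Rightarrow> (('g \<times> bool) \<Rightarrow>\<^sub>0 nat) \<Rightarrow>\<^sub>0 'a dual) \<circ> y"
  have sx: "{k. ?x k \<noteq> 0} = {k. x k \<noteq> 0}" and sy: "{k. ?y k \<noteq> 0} = {k. y k \<noteq> 0}"
    by (simp_all add: iota_eq_0)
  have "galg_elem G ?x" "galg_elem G ?y" using assms sx sy by (simp_all add: galg_elem_def)
  hence "law_eval c (\<lambda>a. Poly_Mapping.single 0 a) (galg_mult G ?x ?y)
      = law_eval c (\<lambda>a. Poly_Mapping.single 0 a) ?x * law_eval c (\<lambda>a. Poly_Mapping.single 0 a) ?y"
    using assms(1) unfolding det2_def by blast
  hence "iota (Dv c (galg_mult G x y)) = (iota (Dv c x) * iota (Dv c y) :: (('g \<times> bool) \<Rightarrow>\<^sub>0 nat) \<Rightarrow>\<^sub>0 'a dual)"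
    unfolding law_eval_iota galg_mult_iota Dv_iota .
  thus ?thesis by (simp add: iota_eq_iff flip: iota_mult)
qed


definition dl :: "'g \<Rightarrow> 'r::comm_ring_1 \<Rightarrow> 'g \<Rightarrow> 'r" where
  "dl g p = (\<lambda>k. if k = g then p else 0)"

lemma dl_supp: "{k. dl g p k \<noteq> 0} \<subseteq> {g}"
  by (auto simp: dl_def)

lemma Dv_dl: "Dv cc (dl g p) = p ^ 2 * cc (sq2 g)"
  by (simp add: dl_def Dv_delta)

lemma Dv_dl2: "Dv cc (\<lambda>k. dl a p k + dl b q k) = p ^ 2 * cc (sq2 a) + q ^ 2 * cc (sq2 b) + p * q * bet cc a b"
  unfolding dl_def by (rule Dv_two_deltas)

lemma Bl_add_left: "Bl cc S (\<lambda>k. u k + u' k) v = Bl cc S u v + Bl cc S u' v"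
  unfolding Bl_def by (simp add: algebra_simps sum.distrib)

lemma Bl_add_right: "Bl cc S u (\<lambda>k. v k + v' k) = Bl cc S u v + Bl cc S u v'"
proof -
  have "Bl cc S u (\<lambda>k. v k + v' k) = Bl cc S (\<lambda>k. v k + v' k) u" by (rule Bl_sym)
  also have "\<dots> = Bl cc S v u + Bl cc S v' u" by (rule Bl_add_left)
  also have "\<dots> = Bl cc S u v + Bl cc S u v'" by (simp only: Bl_sym[of cc S v u] Bl_sym[of cc S v' u])
  finally show ?thesis .
qed

lemma Bl_dl_dl:
  assumes "finite S" "a \<in> S" "b \<in> S"
  shows "Bl cc S (dl a p) (dl b q) = p * q * bet cc a b"
proof -
  have "Bl cc S (dl a p) (dl b q) = q * (\<Sum>k\<in>S. dl a p k * bet cc k b)"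
    unfolding dl_def by (rule Bl_delta_right[OF assms(1,3)])
  also have "(\<Sum>k\<in>S. dl a p k * bet cc k b) = (\<Sum>k\<in>S. if k = a then p * bet cc a b else 0)"
    by (intro sum.cong refl) (simp add: dl_def)
  also have "\<dots> = p * bet cc a b" using assms by simp
  finally show ?thesis by (simp add: mult_ac)
qed

lemma finite_supp_add:
  "finite {k. u k \<noteq> 0} \<Longrightarrow> finite {k. v k \<noteq> (0::'r::comm_ring_1)} \<Longrightarrow> finite {k. u k + v k \<noteq> 0}"
  by (rule finite_subset[of _ "{k. u k \<noteq> 0} \<union> {k. v k \<noteq> 0}"]) auto

lemma galg_mult_add_left:
  assumes "finite {k. u k \<noteq> 0}" "finite {k. v k \<noteq> 0}" "finite {k. y k \<noteq> 0}"
  shows "galg_mult G (\<lambda>k. u k + v k) y = (\<lambda>m. galg_mult G u y m + galg_mult G v y m)"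
proof -
  let ?A = "{k. u k \<noteq> 0} \<union> {k. v k \<noteq> 0}" and ?B = "{k. y k \<noteq> 0}"
  have fA: "finite ?A" using assms by simp
  have sA: "{k. u k + v k \<noteq> 0} \<subseteq> ?A" by auto
  have "galg_mult G (\<lambda>k. u k + v k) y = gm G ?A ?B (\<lambda>k. u k + v k) y"
    by (rule galg_mult_gm[OF fA assms(3) sA order_refl])
  moreover have "galg_mult G u y = gm G ?A ?B u y"
    by (rule galg_mult_gm[OF fA assms(3) _ order_refl]) auto
  moreover have "galg_mult G v y = gm G ?A ?B v y"
    by (rule galg_mult_gm[OF fA assms(3) _ order_refl]) auto
  ultimately show ?thesis by (simp add: gm_def distrib_right sum.distrib)
qed

lemma if_distrib_plus_zero: "(if P then a + b else 0) = (if P then a else 0) + (if P then b else (0::'r::comm_ring_1))"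
  by simp

lemma galg_mult_add_right:
  assumes "finite {k. x k \<noteq> 0}" "finite {k. u k \<noteq> 0}" "finite {k. v k \<noteq> 0}"
  shows "galg_mult G x (\<lambda>k. u k + v k) = (\<lambda>m. galg_mult G x u m + galg_mult G x v m)"
proof -
  let ?A = "{k. x k \<noteq> 0}" and ?B = "{k. u k \<noteq> 0} \<union> {k. v k \<noteq> 0}"
  have fB: "finite ?B" using assms by simp
  have sB: "{k. u k + v k \<noteq> 0} \<subseteq> ?B" by auto
  have "galg_mult G x (\<lambda>k. u k + v k) = gm G ?A ?B x (\<lambda>k. u k + v k)"
    by (rule galg_mult_gm[OF assms(1) fB order_refl sB])
  moreover have "galg_mult G x u = gm G ?A ?B x u"
    by (rule galg_mult_gm[OF assms(1) fB order_refl]) auto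
  moreover have "galg_mult G x v = gm G ?A ?B x v"
    by (rule galg_mult_gm[OF assms(1) fB order_refl]) auto
  moreover have "\<And>g m. pf (\<lambda>h. g \<otimes>\<^bsub>G\<^esub> h) (\<lambda>k. u k + v k) ?B m
      = pf (\<lambda>h. g \<otimes>\<^bsub>G\<^esub> h) u ?B m + pf (\<lambda>h. g \<otimes>\<^bsub>G\<^esub> h) v ?B m"
    unfolding pf_def by (simp add: sum.distrib[symmetric] if_distrib_plus_zero)
  ultimately show ?thesis by (simp add: gm_def distrib_left sum.distrib)
qed

lemma galg_mult_dl: "galg_mult G (dl a p) (dl b q) = dl (a \<otimes>\<^bsub>G\<^esub> b) (p * q)"
proof -
  have "galg_mult G (dl a p) (dl b q) = gm G {a} {b} (dl a p) (dl b q)"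
    by (rule galg_mult_gm) (auto simp: dl_def)
  also have "gm G {a} {b} (dl a p) (dl b q) = dl (a \<otimes>\<^bsub>G\<^esub> b) (p * q)"
    unfolding gm_def pf_def dl_def by (intro ext) simp
  finally show ?thesis .
qed

lemma finite_dl: "finite {k. dl g p k \<noteq> 0}"
  by (rule finite_subset[OF dl_supp]) simp


section \<open>Necessity\<close>

lemma trivial_sq2: "g \<in> carrier G \<Longrightarrow> trivial_det G (sq2 g) = 1"
  by (simp add: trivial_det_def monos2_char keys_sq2)

lemma trivial_pr2: "a \<in> carrier G \<Longrightarrow> b \<in> carrier G \<Longrightarrow> a \<noteq> b \<Longrightarrow> trivial_det G (pr2 a b) = 2"
proof -
  assume "a \<in> carrier G" "b \<in> carrier G" "a \<noteq> b"
  hence "pr2 a b \<in> monos2 (carrier G)" by (auto simp: monos2_char)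
  thus ?thesis using \<open>a \<noteq> b\<close> by (simp add: trivial_det_def keys_pr2)
qed

locale nec = group G for G :: "('g, 'b) monoid_scheme" (structure) +
  fixes c :: "('g \<Rightarrow>\<^sub>0 nat) \<Rightarrow> 'a::comm_ring_1 dual"
  assumes two_a: "(2::'a) = 0" and det: "det2 G c" and red: "reduce_law c = trivial_det G"
begin

lemma dbl: "(x::'a) + x = 0"
proof -
  have "x + x = 2 * x" by (rule mult_2[symmetric])
  also have "\<dots> = 0 * x" by (simp only: two_a)
  also have "\<dots> = 0" by (rule mult_zero_left)
  finally show ?thesis .
qed

lemma dbl2: "(x::'a) + (x + y) = y"
  by (simp only: add.assoc[symmetric] dbl add_0)

lemma char2_eq: "(x::'a) + y = 0 \<Longrightarrow> x = y"
proof -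
  assume h: "x + y = 0"
  have "x = x + (y + y)" by (simp only: dbl add_0_right)
  also have "\<dots> = (x + y) + y" by (simp only: add.assoc)
  also have "\<dots> = y" by (simp only: h add_0)
  finally show ?thesis .
qed

lemma re_sq: "g \<in> carrier G \<Longrightarrow> re (c (sq2 g)) = 1"
  using fun_cong[OF red, of "sq2 g"] by (simp add: reduce_law_def trivial_sq2)

lemma re_bet: "a \<in> carrier G \<Longrightarrow> b \<in> carrier G \<Longrightarrow> re (bet c a b) = 0"
proof -
  assume ab: "a \<in> carrier G" "b \<in> carrier G"
  show ?thesis
  proof (cases "a = b")
    case True thus ?thesis using two_a by (simp add: bet_def)
  next
    case False
    thus ?thesis using fun_cong[OF red, of "pr2 a b"] ab two_a
      by (simp add: reduce_law_def trivial_pr2 bet_def)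
  qed
qed

definition "del g = eps (c (sq2 g))"
definition "tau g = eps (bet c \<one> g)"

lemma mult:
  assumes "finite {k. x k \<noteq> 0}" "{k. x k \<noteq> 0} \<subseteq> carrier G"
    "finite {k. y k \<noteq> 0}" "{k. y k \<noteq> 0} \<subseteq> carrier G"
  shows "Dv c (galg_mult G x y) = Dv c x * Dv c y"
  by (rule det2_mult[OF det assms])

lemma dl_ok: "g \<in> carrier G \<Longrightarrow> finite {k. dl g p k \<noteq> 0} \<and> {k. dl g p k \<noteq> 0} \<subseteq> carrier G"
  using dl_supp[of g p] finite_dl[of g p] by blast

lemma dl2_ok: "g \<in> carrier G \<Longrightarrow> h \<in> carrier G \<Longrightarrow>
    finite {k. dl g p k + dl h q k \<noteq> 0} \<and> {k. dl g p k + dl h q k \<noteq> 0} \<subseteq> carrier G"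
proof -
  assume "g \<in> carrier G" "h \<in> carrier G"
  moreover have "{k. dl g p k + dl h q k \<noteq> 0} \<subseteq> {g, h}" by (auto simp: dl_def)
  ultimately show ?thesis using finite_subset[of _ "{g, h}"] by auto
qed

lemma sq_mult: "g \<in> carrier G \<Longrightarrow> h \<in> carrier G \<Longrightarrow> c (sq2 (g \<otimes> h)) = c (sq2 g) * c (sq2 h)"
proof -
  assume gh: "g \<in> carrier G" "h \<in> carrier G"
  have "Dv c (galg_mult G (dl g 1) (dl h 1)) = Dv c (dl g 1) * Dv c (dl h 1)"
    using dl_ok[of g 1] dl_ok[of h 1] gh by (intro mult) auto
  thus ?thesis by (simp add: galg_mult_dl Dv_dl)
qed

lemma del_mult: "g \<in> carrier G \<Longrightarrow> h \<in> carrier G \<Longrightarrow> del (g \<otimes> h) = del g + del h"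
  by (simp add: del_def sq_mult re_sq)

lemma del_one: "del \<one> = 0"
proof -
  have "del \<one> = del \<one> + del \<one>" using del_mult[of \<one> \<one>] by simp
  thus ?thesis by (simp add: dbl)
qed

lemma instB: "g \<in> carrier G \<Longrightarrow> k \<in> carrier G \<Longrightarrow> eps (bet c g (g \<otimes> k)) = tau k"
proof -
  assume gk: "g \<in> carrier G" "k \<in> carrier G"
  let ?y = "\<lambda>m. dl \<one> (1::'a dual) m + dl k 1 m"
  have "Dv c (galg_mult G (dl g 1) ?y) = Dv c (dl g 1) * Dv c ?y"
    using dl_ok[of g 1] dl2_ok[of \<one> k 1 1] gk by (intro mult) auto
  moreover have "galg_mult G (dl g 1) ?y = (\<lambda>m. dl g 1 m + dl (g \<otimes> k) 1 m)"
    by (subst galg_mult_add_right) (simp_all add: finite_dl galg_mult_dl gk)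
  ultimately have E: "c (sq2 g) + c (sq2 (g \<otimes> k)) + bet c g (g \<otimes> k)
      = c (sq2 g) * (c (sq2 \<one>) + c (sq2 k) + bet c \<one> k)"
    by (simp add: Dv_dl Dv_dl2)
  have "eps (c (sq2 g)) + eps (c (sq2 (g \<otimes> k))) + eps (bet c g (g \<otimes> k))
      = eps (c (sq2 \<one>)) + eps (c (sq2 k)) + eps (bet c \<one> k)"
    using arg_cong[OF E, of eps] gk by (simp add: re_sq re_bet two_a)
  hence "del g + del (g \<otimes> k) + eps (bet c g (g \<otimes> k)) = del \<one> + del k + tau k"
    by (simp only: del_def tau_def)
  hence "del g + (del g + del k) + eps (bet c g (g \<otimes> k)) = 0 + del k + tau k"
    by (simp only: del_mult[OF gk] del_one)
  hence "del k + eps (bet c g (g \<otimes> k)) = del k + tau k"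
    by (simp only: dbl2 add_0)
  thus ?thesis by simp
qed

lemma instB': "g \<in> carrier G \<Longrightarrow> k \<in> carrier G \<Longrightarrow> eps (bet c g (k \<otimes> g)) = tau k"
proof -
  assume gk: "g \<in> carrier G" "k \<in> carrier G"
  let ?x = "\<lambda>m. dl \<one> (1::'a dual) m + dl k 1 m"
  have "Dv c (galg_mult G ?x (dl g 1)) = Dv c ?x * Dv c (dl g 1)"
    using dl_ok[of g 1] dl2_ok[of \<one> k 1 1] gk by (intro mult) auto
  moreover have "galg_mult G ?x (dl g 1) = (\<lambda>m. dl g 1 m + dl (k \<otimes> g) 1 m)"
    by (subst galg_mult_add_left) (simp_all add: finite_dl galg_mult_dl gk)
  ultimately have E: "c (sq2 g) + c (sq2 (k \<otimes> g)) + bet c g (k \<otimes> g)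
      = (c (sq2 \<one>) + c (sq2 k) + bet c \<one> k) * c (sq2 g)"
    by (simp add: Dv_dl Dv_dl2)
  have "eps (c (sq2 g)) + eps (c (sq2 (k \<otimes> g))) + eps (bet c g (k \<otimes> g))
      = eps (c (sq2 \<one>)) + eps (c (sq2 k)) + eps (bet c \<one> k)"
    using arg_cong[OF E, of eps] gk by (simp add: re_sq re_bet two_a)
  hence "del g + del (k \<otimes> g) + eps (bet c g (k \<otimes> g)) = del \<one> + del k + tau k"
    by (simp only: del_def tau_def)
  hence "del g + (del g + del k) + eps (bet c g (k \<otimes> g)) = 0 + del k + tau k"
    using gk by (simp only: del_mult del_one add.commute[of "del k" "del g"])
  hence "del k + eps (bet c g (k \<otimes> g)) = del k + tau k"
    by (simp only: dbl2 add_0)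
  thus ?thesis by simp
qed

lemma eps_bet: "a \<in> carrier G \<Longrightarrow> b \<in> carrier G \<Longrightarrow> eps (bet c a b) = tau (inv a \<otimes> b)"
  using instB[of a "inv a \<otimes> b"] by (simp add: m_assoc[symmetric])

lemma instC: "g \<in> carrier G \<Longrightarrow> h \<in> carrier G \<Longrightarrow> tau (g \<otimes> h) = tau (inv h \<otimes> g)"
proof -
  assume gh: "g \<in> carrier G" "h \<in> carrier G"
  let ?x = "\<lambda>m. dl \<one> (1::'a dual) m + dl g 1 m"
  let ?y = "\<lambda>m. dl \<one> (1::'a dual) m + dl h 1 m"
  let ?U = "\<lambda>m. dl \<one> (1::'a dual) m + dl h 1 m"
  let ?V = "\<lambda>m. dl g (1::'a dual) m + dl (g \<otimes> h) 1 m"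
  have M: "Dv c (galg_mult G ?x ?y) = Dv c ?x * Dv c ?y"
    using dl2_ok[of \<one> g 1 1] dl2_ok[of \<one> h 1 1] gh by (intro mult) auto
  have fy: "finite {k. ?y k \<noteq> 0}" using dl2_ok[of \<one> h 1 1] gh by auto
  have "galg_mult G ?x ?y = (\<lambda>m. galg_mult G (dl \<one> 1) ?y m + galg_mult G (dl g 1) ?y m)"
    by (rule galg_mult_add_left) (simp_all add: finite_dl fy)
  also have "galg_mult G (dl \<one> 1) ?y = ?U"
    by (subst galg_mult_add_right) (simp_all add: finite_dl galg_mult_dl gh)
  also have "galg_mult G (dl g 1) ?y = ?V"
    by (subst galg_mult_add_right) (simp_all add: finite_dl galg_mult_dl gh)
  finally have xy: "galg_mult G ?x ?y = (\<lambda>m. ?U m + ?V m)" .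
  let ?S = "{\<one>, h, g, g \<otimes> h}"
  have "Dv c (\<lambda>m. ?U m + ?V m) = Dv c ?U + Dv c ?V + Bl c ?S ?U ?V"
    by (rule Dv_add) (auto simp: dl_def)
  also have "Bl c ?S ?U ?V = bet c \<one> g + bet c \<one> (g \<otimes> h) + (bet c h g + bet c h (g \<otimes> h))"
    by (simp add: Bl_add_left Bl_add_right Bl_dl_dl)
  finally have L: "Dv c (\<lambda>m. ?U m + ?V m) = (c (sq2 \<one>) + c (sq2 h) + bet c \<one> h)
      + (c (sq2 g) + c (sq2 (g \<otimes> h)) + bet c g (g \<otimes> h))
      + (bet c \<one> g + bet c \<one> (g \<otimes> h) + (bet c h g + bet c h (g \<otimes> h)))"
    by (simp add: Dv_dl2)
  have E: "(c (sq2 \<one>) + c (sq2 h) + bet c \<one> h)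
      + (c (sq2 g) + c (sq2 (g \<otimes> h)) + bet c g (g \<otimes> h))
      + (bet c \<one> g + bet c \<one> (g \<otimes> h) + (bet c h g + bet c h (g \<otimes> h)))
      = (c (sq2 \<one>) + c (sq2 g) + bet c \<one> g) * (c (sq2 \<one>) + c (sq2 h) + bet c \<one> h)"
    using M unfolding xy L by (simp add: Dv_dl2)
  have "(eps (c (sq2 \<one>)) + eps (c (sq2 h)) + eps (bet c \<one> h))
      + (eps (c (sq2 g)) + eps (c (sq2 (g \<otimes> h))) + eps (bet c g (g \<otimes> h)))
      + (eps (bet c \<one> g) + eps (bet c \<one> (g \<otimes> h)) + (eps (bet c h g) + eps (bet c h (g \<otimes> h)))) = 0"
    using arg_cong[OF E, of eps] gh by (simp add: re_sq re_bet two_a)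
  hence "(del \<one> + del h + tau h) + (del g + del (g \<otimes> h) + eps (bet c g (g \<otimes> h)))
      + (tau g + tau (g \<otimes> h) + (eps (bet c h g) + eps (bet c h (g \<otimes> h)))) = 0"
    by (simp only: del_def tau_def)
  hence "(0 + del h + tau h) + (del g + (del g + del h) + tau h)
      + (tau g + tau (g \<otimes> h) + (tau (inv h \<otimes> g) + tau g)) = 0"
    using gh by (simp only: del_one del_mult instB instB' eps_bet)
  hence "tau (g \<otimes> h) + tau (inv h \<otimes> g) = 0"
    by (simp only: add_ac dbl dbl2 add_0 add_0_right)
  thus ?thesis by (rule char2_eq)
qed

lemma tau_sq: "x \<in> carrier G \<Longrightarrow> w \<in> carrier G \<Longrightarrow> tau (x \<otimes> (w \<otimes> w)) = tau x"
proof -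
  assume xw: "x \<in> carrier G" "w \<in> carrier G"
  have "tau (x \<otimes> (w \<otimes> w)) = tau ((x \<otimes> w) \<otimes> w)" using xw by (simp add: m_assoc)
  also have "\<dots> = tau (inv w \<otimes> (x \<otimes> w))" by (rule instC) (use xw in simp_all)
  also have "\<dots> = eps (bet c w (x \<otimes> w))" using xw by (simp add: eps_bet)
  also have "\<dots> = tau x" using xw by (simp add: instB')
  finally show ?thesis .
qed

lemma del_sq: "x \<in> carrier G \<Longrightarrow> w \<in> carrier G \<Longrightarrow> del (x \<otimes> (w \<otimes> w)) = del x"
proof -
  assume xw: "x \<in> carrier G" "w \<in> carrier G"
  have "del (x \<otimes> (w \<otimes> w)) = del x + (del w + del w)"
    by (simp only: del_mult[OF xw(1) m_closed[OF xw(2) xw(2)]] del_mult[OF xw(2) xw(2)])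
  thus ?thesis by (simp only: dbl add_0_right)
qed

lemma tau_one: "tau \<one> = 0"
  by (simp add: tau_def bet_def two_a)

end


section \<open>Square-invariant functions\<close>

lemma (in group) gcl: "x \<in> carrier G \<Longrightarrow> y \<in> carrier G \<Longrightarrow> inv x \<otimes> (x \<otimes> y) = y"
  by (simp add: m_assoc[symmetric])

lemma (in group) gcr: "x \<in> carrier G \<Longrightarrow> y \<in> carrier G \<Longrightarrow> x \<otimes> (inv x \<otimes> y) = y"
  by (simp add: m_assoc[symmetric])

locale tsq = group G for G :: "('g, 'b) monoid_scheme" (structure) +
  fixes t :: "'g \<Rightarrow> 'x"
  assumes tsq: "x \<in> carrier G \<Longrightarrow> w \<in> carrier G \<Longrightarrow> t (x \<otimes> (w \<otimes> w)) = t x"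
begin

lemma T2: "x \<in> carrier G \<Longrightarrow> w \<in> carrier G \<Longrightarrow> t (x \<otimes> inv w) = t (x \<otimes> w)"
proof -
  assume xw: "x \<in> carrier G" "w \<in> carrier G"
  have "x \<otimes> w = (x \<otimes> inv w) \<otimes> (w \<otimes> w)" using xw by (simp add: m_assoc gcr gcl)
  thus ?thesis using xw tsq[of "x \<otimes> inv w" w] by simp
qed

lemma T3: "x \<in> carrier G \<Longrightarrow> u \<in> carrier G \<Longrightarrow> v \<in> carrier G \<Longrightarrow> t (x \<otimes> u \<otimes> v) = t (x \<otimes> v \<otimes> u)"
proof -
  assume xuv: "x \<in> carrier G" "u \<in> carrier G" "v \<in> carrier G"
  define y0 where "y0 = x \<otimes> v \<otimes> u"
  define y1 where "y1 = y0 \<otimes> (inv u \<otimes> inv u)"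
  define y2 where "y2 = y1 \<otimes> ((u \<otimes> inv v) \<otimes> (u \<otimes> inv v))"
  define y3 where "y3 = y2 \<otimes> (v \<otimes> v)"
  have c: "y0 \<in> carrier G" "y1 \<in> carrier G" "y2 \<in> carrier G"
    using xuv by (simp_all add: y0_def y1_def y2_def)
  have "t y3 = t y2" unfolding y3_def using c xuv by (simp add: tsq)
  also have "\<dots> = t y1" unfolding y2_def using c xuv by (simp add: tsq)
  also have "\<dots> = t y0" unfolding y1_def using c xuv by (simp add: tsq)
  finally have "t y3 = t y0" .
  moreover have "y3 = x \<otimes> u \<otimes> v"
    unfolding y3_def y2_def y1_def y0_def using xuv by (simp add: m_assoc gcl gcr)
  ultimately show ?thesis by (simp add: y0_def)
qed

lemma Tc: "u \<in> carrier G \<Longrightarrow> v \<in> carrier G \<Longrightarrow> t (u \<otimes> v) = t (v \<otimes> u)"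
  using T3[of \<one> u v] by simp

lemma Tnorm: "b \<in> carrier G \<Longrightarrow> k \<in> carrier G \<Longrightarrow> c \<in> carrier G \<Longrightarrow> t (inv b \<otimes> k \<otimes> c) = t (k \<otimes> c \<otimes> b)"
proof -
  assume bkc: "b \<in> carrier G" "k \<in> carrier G" "c \<in> carrier G"
  have "t (inv b \<otimes> k \<otimes> c) = t (inv b \<otimes> c \<otimes> k)" using bkc by (simp add: T3)
  also have "\<dots> = t (k \<otimes> (inv b \<otimes> c))" using bkc by (intro Tc) simp_all
  also have "\<dots> = t (k \<otimes> inv b \<otimes> c)" using bkc by (simp add: m_assoc)
  also have "\<dots> = t (k \<otimes> c \<otimes> inv b)" using bkc by (simp add: T3)
  also have "\<dots> = t (k \<otimes> c \<otimes> b)" using bkc by (simp add: T2)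
  finally show ?thesis .
qed

lemma Tsym: "b \<in> carrier G \<Longrightarrow> c \<in> carrier G \<Longrightarrow> k \<in> carrier G \<Longrightarrow> t (inv b \<otimes> k \<otimes> c) = t (inv c \<otimes> k \<otimes> b)"
proof -
  assume bck: "b \<in> carrier G" "c \<in> carrier G" "k \<in> carrier G"
  have "t (inv b \<otimes> k \<otimes> c) = t (k \<otimes> c \<otimes> b)" by (rule Tnorm[OF bck(1,3,2)])
  also have "\<dots> = t (k \<otimes> b \<otimes> c)" using bck by (intro T3) auto
  also have "\<dots> = t (inv c \<otimes> k \<otimes> b)" using Tnorm[of c k b] bck by simp
  finally show ?thesis .
qed

lemma Tconj: "b \<in> carrier G \<Longrightarrow> k \<in> carrier G \<Longrightarrow> t (inv b \<otimes> k \<otimes> b) = t k"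
proof -
  assume bk: "b \<in> carrier G" "k \<in> carrier G"
  have "t (inv b \<otimes> k \<otimes> b) = t (inv b \<otimes> b \<otimes> k)" using bk by (simp add: T3)
  thus ?thesis using bk by simp
qed

lemma Tinv: "a \<in> carrier G \<Longrightarrow> b \<in> carrier G \<Longrightarrow> t (inv a \<otimes> b) = t (inv b \<otimes> a)"
  using Tsym[of a b \<one>] by simp

end

section \<open>Topology\<close>

lemma sq_invariant:
  assumes pg: "profinite_group G T"
    and f: "continuous_map T (discrete_topology UNIV) f"
    and sq: "\<And>x w. x \<in> carrier G \<Longrightarrow> w \<in> carrier G \<Longrightarrow> f (x \<otimes>\<^bsub>G\<^esub> (w \<otimes>\<^bsub>G\<^esub> w)) = f x"
    and x: "x \<in> carrier G" and h: "h \<in> sq_subgroup G T"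
  shows "f (x \<otimes>\<^bsub>G\<^esub> h) = f x"
proof -
  have grp: "group G" and top: "topspace T = carrier G"
    and mc: "continuous_map (prod_topology T T) T (\<lambda>(x, y). x \<otimes>\<^bsub>G\<^esub> y)"
    using pg by (auto simp: profinite_group_def)
  interpret group G by (rule grp)
  let ?Sq = "{g \<otimes>\<^bsub>G\<^esub> g | g. g \<in> carrier G}"
  have Sqc: "?Sq \<subseteq> carrier G" by auto
  have gen: "w \<in> generate G ?Sq \<Longrightarrow> (\<forall>y\<in>carrier G. f (y \<otimes>\<^bsub>G\<^esub> w) = f y)" for w
  proof (induction rule: generate.induct)
    case one thus ?case by simp
  next
    case (incl h) thus ?case using sq by auto
  next
    case (inv h)
    then obtain g where g: "g \<in> carrier G" "h = g \<otimes>\<^bsub>G\<^esub> g" by auto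
    hence "inv\<^bsub>G\<^esub> h = inv\<^bsub>G\<^esub> g \<otimes>\<^bsub>G\<^esub> inv\<^bsub>G\<^esub> g" by (simp add: inv_mult_group)
    thus ?case using sq g by simp
  next
    case (eng h1 h2)
    have h12: "h1 \<in> carrier G" "h2 \<in> carrier G"
      using generate_in_carrier[OF Sqc] eng.hyps by auto
    show ?case
    proof
      fix y assume y: "y \<in> carrier G"
      have "f (y \<otimes>\<^bsub>G\<^esub> (h1 \<otimes>\<^bsub>G\<^esub> h2)) = f ((y \<otimes>\<^bsub>G\<^esub> h1) \<otimes>\<^bsub>G\<^esub> h2)" using y h12 by (simp add: m_assoc)
      also have "\<dots> = f (y \<otimes>\<^bsub>G\<^esub> h1)" using eng.IH(2) y h12 by simp
      also have "\<dots> = f y" using eng.IH(1) y by simp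
      finally show "f (y \<otimes>\<^bsub>G\<^esub> (h1 \<otimes>\<^bsub>G\<^esub> h2)) = f y" .
    qed
  qed
  have cm: "continuous_map T T (\<lambda>w. x \<otimes>\<^bsub>G\<^esub> w)"
  proof -
    have "continuous_map T (prod_topology T T) (\<lambda>w. (x, w))"
      by (intro continuous_map_pairedI) (simp_all add: top x continuous_map_id[unfolded id_def])
    hence "continuous_map T T ((\<lambda>(x, y). x \<otimes>\<^bsub>G\<^esub> y) \<circ> (\<lambda>w. (x, w)))"
      using mc by (rule continuous_map_compose)
    thus ?thesis by (simp add: o_def)
  qed
  have cf: "continuous_map T (discrete_topology UNIV) (f \<circ> (\<lambda>w. x \<otimes>\<^bsub>G\<^esub> w))"
    using cm f by (rule continuous_map_compose)
  have cl: "closedin T {w \<in> topspace T. (f \<circ> (\<lambda>w. x \<otimes>\<^bsub>G\<^esub> w)) w \<in> {f x}}"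
    by (rule closedin_continuous_map_preimage[OF cf]) simp
  have "generate G ?Sq \<subseteq> {w \<in> topspace T. (f \<circ> (\<lambda>w. x \<otimes>\<^bsub>G\<^esub> w)) w \<in> {f x}}"
    using gen x generate_incl[OF Sqc] top by auto
  hence "sq_subgroup G T \<subseteq> {w \<in> topspace T. (f \<circ> (\<lambda>w. x \<otimes>\<^bsub>G\<^esub> w)) w \<in> {f x}}"
    unfolding sq_subgroup_def using cl by (rule closure_of_minimal)
  thus ?thesis using h by auto
qed

lemma sq_in_sq_subgroup:
  assumes pg: "profinite_group G T" and w: "w \<in> carrier G"
  shows "w \<otimes>\<^bsub>G\<^esub> w \<in> sq_subgroup G T"
proof -
  have grp: "group G" and top: "topspace T = carrier G"
    using pg by (auto simp: profinite_group_def)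
  interpret group G by (rule grp)
  have Sqc: "{g \<otimes>\<^bsub>G\<^esub> g | g. g \<in> carrier G} \<subseteq> carrier G" by auto
  have "w \<otimes>\<^bsub>G\<^esub> w \<in> generate G {g \<otimes>\<^bsub>G\<^esub> g | g. g \<in> carrier G}"
    using w by (intro generate.incl) auto
  moreover have "generate G {g \<otimes>\<^bsub>G\<^esub> g | g. g \<in> carrier G} \<subseteq> topspace T"
    using generate_incl[OF Sqc] top by simp
  ultimately show ?thesis unfolding sq_subgroup_def using closure_of_subset by blast
qed

lemma sq_subgroup_carrier: "profinite_group G T \<Longrightarrow> sq_subgroup G T \<subseteq> carrier G"
  unfolding sq_subgroup_def profinite_group_def using closure_of_subset_topspace by metis


section \<open>Construction\<close>

definition pick_pr :: "('g \<Rightarrow>\<^sub>0 nat) \<Rightarrow> 'g \<times> 'g" where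
  "pick_pr \<alpha> = (SOME p. fst p \<noteq> snd p \<and> \<alpha> = pr2 (fst p) (snd p))"

definition mk_law :: "('g, 'b) monoid_scheme \<Rightarrow> ('g \<Rightarrow> 'a) \<Rightarrow> ('g \<Rightarrow> 'a) \<Rightarrow> ('g \<Rightarrow>\<^sub>0 nat) \<Rightarrow> 'a::comm_ring_1 dual" where
  "mk_law G t d \<alpha> = Dual (trivial_det G \<alpha>)
     (if \<alpha> \<in> monos2 (carrier G) then
        (if card (Poly_Mapping.keys \<alpha>) = 1 then d (SOME g. \<alpha> = sq2 g)
         else t (inv\<^bsub>G\<^esub> (fst (pick_pr \<alpha>)) \<otimes>\<^bsub>G\<^esub> snd (pick_pr \<alpha>)))
      else 0)"

lemma sq2_inj: "sq2 g = sq2 h \<Longrightarrow> g = h"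
proof -
  assume "sq2 g = sq2 h"
  hence "Poly_Mapping.lookup (sq2 g) g = Poly_Mapping.lookup (sq2 h) g" by simp
  thus "g = h" by (simp add: lookup_sq2 split: if_splits)
qed

lemma pr2_eq:
  assumes "a \<noteq> b" "a' \<noteq> b'" "pr2 a b = pr2 a' b'"
  shows "(a' = a \<and> b' = b) \<or> (a' = b \<and> b' = a)"
proof -
  have "{a, b} = {a', b'}" using assms keys_pr2 by metis
  thus ?thesis using assms(1,2) by (auto simp: doubleton_eq_iff)
qed

lemma mk_sq: "g \<in> carrier G \<Longrightarrow> mk_law G t d (sq2 g) = Dual 1 (d g)"
proof -
  assume g: "g \<in> carrier G"
  have m: "sq2 g \<in> monos2 (carrier G)" using g by (simp add: monos2_char)
  have "(SOME h. sq2 g = sq2 h) = g"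
    by (rule some_equality) (auto dest: sq2_inj)
  thus ?thesis using g m by (simp add: mk_law_def trivial_sq2 keys_sq2)
qed

lemma mk_pr:
  assumes "a \<in> carrier G" "b \<in> carrier G" "a \<noteq> b"
    and sym: "\<And>x y. x \<in> carrier G \<Longrightarrow> y \<in> carrier G \<Longrightarrow> t (inv\<^bsub>G\<^esub> x \<otimes>\<^bsub>G\<^esub> y) = t (inv\<^bsub>G\<^esub> y \<otimes>\<^bsub>G\<^esub> x)"
  shows "mk_law G t d (pr2 a b) = Dual 2 (t (inv\<^bsub>G\<^esub> a \<otimes>\<^bsub>G\<^esub> b))"
proof -
  have m: "pr2 a b \<in> monos2 (carrier G)" using assms by (auto simp: monos2_char)
  have ex: "\<exists>p. fst p \<noteq> snd p \<and> pr2 a b = pr2 (fst p) (snd p)"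
    using assms(3) by (intro exI[of _ "(a, b)"]) simp
  hence p: "fst (pick_pr (pr2 a b)) \<noteq> snd (pick_pr (pr2 a b))"
      "pr2 a b = pr2 (fst (pick_pr (pr2 a b))) (snd (pick_pr (pr2 a b)))"
    unfolding pick_pr_def by (metis (mono_tags, lifting) someI_ex)+
  have "t (inv\<^bsub>G\<^esub> (fst (pick_pr (pr2 a b))) \<otimes>\<^bsub>G\<^esub> snd (pick_pr (pr2 a b))) = t (inv\<^bsub>G\<^esub> a \<otimes>\<^bsub>G\<^esub> b)"
    using pr2_eq[OF assms(3) p(1) p(2)] sym[OF assms(2,1)] by auto
  moreover have "card (Poly_Mapping.keys (pr2 a b)) \<noteq> 1" using assms(3) by (simp add: keys_pr2)
  ultimately show ?thesis using m assms by (simp add: mk_law_def trivial_pr2)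
qed

lemma mk_out: "\<alpha> \<notin> monos2 (carrier G) \<Longrightarrow> mk_law G t d \<alpha> = 0"
  by (simp add: mk_law_def trivial_det_def)

lemma mk_re: "reduce_law (mk_law G t d) = trivial_det G"
  by (simp add: reduce_law_def mk_law_def fun_eq_iff)

lemma bet_mk:
  assumes "group G" "(2::'a::comm_ring_1) = 0" "a \<in> carrier G" "b \<in> carrier G" "t \<one>\<^bsub>G\<^esub> = 0"
    and sym: "\<And>x y. x \<in> carrier G \<Longrightarrow> y \<in> carrier G \<Longrightarrow> t (inv\<^bsub>G\<^esub> x \<otimes>\<^bsub>G\<^esub> y) = t (inv\<^bsub>G\<^esub> y \<otimes>\<^bsub>G\<^esub> x)"
  shows "bet (mk_law G t (d :: 'g \<Rightarrow> 'a)) a b = Dual 0 (t (inv\<^bsub>G\<^esub> a \<otimes>\<^bsub>G\<^esub> b))"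
proof (cases "a = b")
  case True
  have "inv\<^bsub>G\<^esub> a \<otimes>\<^bsub>G\<^esub> a = \<one>\<^bsub>G\<^esub>" using assms(1,3) by (simp add: group.l_inv)
  thus ?thesis using True assms by (simp add: bet_def mk_sq two_dual)
next
  case False
  thus ?thesis using assms by (simp add: bet_def mk_pr)
qed


lemma ex1_two:
  fixes x :: "'a::comm_ring_1 dual"
  assumes "(2::'a) = 0" "re x = 0"
  shows "\<exists>!t. x = 2 + Dual 0 t"
proof -
  have "\<And>t. x = 2 + Dual 0 t \<longleftrightarrow> t = eps x"
  proof
    fix t assume "x = 2 + Dual 0 t" thus "t = eps x" by simp
  next
    fix t assume "t = eps x" thus "x = 2 + Dual 0 t" using assms by (intro dual_eqI) simp_all
  qed
  thus ?thesis by (intro ex1I[of _ "eps x"]) auto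
qed

lemma ex1_one:
  fixes x :: "'a::comm_ring_1 dual"
  assumes "re x = 1"
  shows "\<exists>!d. x = 1 + Dual 0 d"
proof -
  have "\<And>d. x = 1 + Dual 0 d \<longleftrightarrow> d = eps x"
  proof
    fix d assume "x = 1 + Dual 0 d" thus "d = eps x" by simp
  next
    fix d assume "d = eps x" thus "x = 1 + Dual 0 d" using assms by (intro dual_eqI) simp_all
  qed
  thus ?thesis by (intro ex1I[of _ "eps x"]) auto
qed

lemma nec_of:
  assumes "profinite_group G T" "(2::'a::comm_ring_1) = 0" "c \<in> tangent_dets G T"
  shows "nec G (c :: ('g \<Rightarrow>\<^sub>0 nat) \<Rightarrow> 'a dual)"
  using assms by (intro nec.intro nec_axioms.intro) (auto simp: profinite_group_def tangent_dets_def)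

lemma part1:
  assumes "profinite_group G T" "(2::'a::comm_ring_1) = 0"
    "(c :: ('g \<Rightarrow>\<^sub>0 nat) \<Rightarrow> 'a dual) \<in> tangent_dets G T" "g \<in> carrier G"
  shows "(\<exists>!t. det_trace G c g = 2 + Dual 0 t) \<and> (\<exists>!d. det_on G c g = 1 + Dual 0 d)"
proof -
  interpret nec G c by (rule nec_of[OF assms(1-3)])
  have "re (det_trace G c g) = 0" using assms(4) by (simp add: det_trace_eq re_bet)
  moreover have "re (det_on G c g) = 1" using assms(4) by (simp add: det_on_eq re_sq)
  ultimately show ?thesis using ex1_two[OF assms(2)] ex1_one by blast
qed

lemma tau_delta_nec:
  assumes "profinite_group G T" "(2::'a::comm_ring_1) = 0"
    "(c :: ('g \<Rightarrow>\<^sub>0 nat) \<Rightarrow> 'a dual) \<in> tangent_dets G T"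
  shows "tau_delta G c = (restrict (nec.tau G c) (carrier G), restrict (nec.del c) (carrier G))"
proof -
  interpret nec G c by (rule nec_of[OF assms(1-3)])
  have "tau = (\<lambda>g. eps (bet c \<one>\<^bsub>G\<^esub> g))" "del = (\<lambda>g. eps (c (sq2 g)))"
    by (simp_all add: fun_eq_iff tau_def del_def)
  thus ?thesis by (simp add: tau_delta_def det_trace_eq det_on_eq)
qed

lemma cont_eps:
  assumes "continuous_map T (discrete_topology UNIV) f"
  shows "continuous_map T (discrete_topology UNIV) (\<lambda>x. eps (f x))"
proof -
  have "continuous_map T (discrete_topology UNIV) (eps \<circ> f)"
    by (rule continuous_map_compose[OF assms]) simp
  thus ?thesis by (simp add: o_def)
qed

lemma cont_restrict:
  assumes "continuous_map T X f" "topspace T = A"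
  shows "continuous_map T X (restrict f A)"
  by (rule continuous_map_eq[OF assms(1)]) (use assms(2) in auto)

lemma part_image:
  assumes pg: "profinite_group G T" and two: "(2::'a::comm_ring_1) = 0"
    and cT: "(c :: ('g \<Rightarrow>\<^sub>0 nat) \<Rightarrow> 'a dual) \<in> tangent_dets G T"
  shows "tau_delta G c \<in> quot_pairs G T"
proof -
  interpret nec G c by (rule nec_of[OF pg two cT])
  have top: "topspace T = carrier G" using pg by (simp add: profinite_group_def)
  have ct: "continuous_map T (discrete_topology UNIV) tau"
  proof -
    have "continuous_map T (discrete_topology UNIV) (\<lambda>g. eps (det_trace G c g))"
      using cT by (intro cont_eps) (simp add: tangent_dets_def)
    moreover have "(\<lambda>g. eps (det_trace G c g)) = tau" by (simp add: fun_eq_iff det_trace_eq tau_def)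
    ultimately show ?thesis by simp
  qed
  have cd: "continuous_map T (discrete_topology UNIV) del"
  proof -
    have "continuous_map T (discrete_topology UNIV) (\<lambda>g. eps (det_on G c g))"
      using cT by (intro cont_eps) (simp add: tangent_dets_def)
    moreover have "(\<lambda>g. eps (det_on G c g)) = del" by (simp add: fun_eq_iff det_on_eq del_def)
    ultimately show ?thesis by simp
  qed
  have sqc: "sq_subgroup G T \<subseteq> carrier G" by (rule sq_subgroup_carrier[OF pg])
  have inv: "\<forall>g\<in>carrier G. \<forall>h\<in>sq_subgroup G T.
      restrict tau (carrier G) (g \<otimes>\<^bsub>G\<^esub> h) = restrict tau (carrier G) g \<and>
      restrict del (carrier G) (g \<otimes>\<^bsub>G\<^esub> h) = restrict del (carrier G) g"
  proof (intro ballI)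
    fix g h assume g: "g \<in> carrier G" and h: "h \<in> sq_subgroup G T"
    have hc: "h \<in> carrier G" using h sqc by auto
    have "tau (g \<otimes>\<^bsub>G\<^esub> h) = tau g" by (rule sq_invariant[OF pg ct _ g h]) (simp add: tau_sq)
    moreover have "del (g \<otimes>\<^bsub>G\<^esub> h) = del g" by (rule sq_invariant[OF pg cd _ g h]) (simp add: del_sq)
    ultimately show "restrict tau (carrier G) (g \<otimes>\<^bsub>G\<^esub> h) = restrict tau (carrier G) g \<and>
      restrict del (carrier G) (g \<otimes>\<^bsub>G\<^esub> h) = restrict del (carrier G) g" using g hc by simp
  qed
  show ?thesis
    unfolding tau_delta_nec[OF pg two cT] quot_pairs_def
    using cont_restrict[OF ct top] cont_restrict[OF cd top] inv tau_one
    by (auto simp: del_mult)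
qed

lemma part_inj:
  assumes pg: "profinite_group G T" and two: "(2::'a::comm_ring_1) = 0"
    and c1T: "(c1 :: ('g \<Rightarrow>\<^sub>0 nat) \<Rightarrow> 'a dual) \<in> tangent_dets G T"
    and c2T: "(c2 :: ('g \<Rightarrow>\<^sub>0 nat) \<Rightarrow> 'a dual) \<in> tangent_dets G T"
    and eq: "tau_delta G c1 = tau_delta G c2"
  shows "c1 = c2"
proof
  interpret N1: nec G c1 by (rule nec_of[OF pg two c1T])
  interpret N2: nec G c2 by (rule nec_of[OF pg two c2T])
  have r: "restrict N1.tau (carrier G) = restrict N2.tau (carrier G)"
     "restrict N1.del (carrier G) = restrict N2.del (carrier G)"
    using eq unfolding tau_delta_nec[OF pg two c1T] tau_delta_nec[OF pg two c2T] by simp_all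
  have et: "\<And>g. g \<in> carrier G \<Longrightarrow> N1.tau g = N2.tau g"
  proof -
    fix g assume "g \<in> carrier G"
    thus "N1.tau g = N2.tau g" using fun_cong[OF r(1), of g] by simp
  qed
  have ed: "\<And>g. g \<in> carrier G \<Longrightarrow> N1.del g = N2.del g"
  proof -
    fix g assume "g \<in> carrier G"
    thus "N1.del g = N2.del g" using fun_cong[OF r(2), of g] by simp
  qed
  fix \<alpha>
  show "c1 \<alpha> = c2 \<alpha>"
  proof (cases "\<alpha> \<in> monos2 (carrier G)")
    case False
    thus ?thesis using N1.det N2.det by (simp add: det2_def law2_def)
  next
    case True
    then consider (s) g where "g \<in> carrier G" "\<alpha> = sq2 g"
      | (p) a b where "a \<in> carrier G" "b \<in> carrier G" "a \<noteq> b" "\<alpha> = pr2 a b"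
      unfolding monos2_char by auto
    thus ?thesis
    proof cases
      case s
      thus ?thesis using ed[of g] by (intro dual_eqI) (simp_all add: N1.re_sq N2.re_sq N1.del_def N2.del_def)
    next
      case p
      have "c1 \<alpha> = bet c1 a b" "c2 \<alpha> = bet c2 a b" using p by (simp_all add: bet_def)
      moreover have "inv\<^bsub>G\<^esub> a \<otimes>\<^bsub>G\<^esub> b \<in> carrier G" using p N1.is_group by (simp add: group.inv_closed monoid.m_closed group.is_monoid)
      ultimately show ?thesis using p et[of "inv\<^bsub>G\<^esub> a \<otimes>\<^bsub>G\<^esub> b"]
        by (intro dual_eqI) (simp_all add: N1.re_bet N2.re_bet N1.eps_bet N2.eps_bet)
    qed
  qed
qed


lemma bet_iota: "bet (iota \<circ> c) a b = iota (bet c a b)"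
  by (simp add: bet_def iota_mult iota_two)

lemma part_surj:
  assumes pg: "profinite_group G T" and two: "(2::'a::comm_ring_1) = 0"
    and tdq: "(t, d) \<in> quot_pairs G (T :: 'g topology)"
  shows "(mk_law G t d :: ('g \<Rightarrow>\<^sub>0 nat) \<Rightarrow> 'a dual) \<in> tangent_dets G T \<and> tau_delta G (mk_law G t d) = (t, d)"
proof -
  have grp: "group G" and top: "topspace T = carrier G"
    using pg by (auto simp: profinite_group_def)
  have tex: "t \<in> extensional (carrier G)" and dext: "d \<in> extensional (carrier G)"
    and ct: "continuous_map T (discrete_topology UNIV) t" and cd: "continuous_map T (discrete_topology UNIV) d"
    and invq: "\<And>g h. g \<in> carrier G \<Longrightarrow> h \<in> sq_subgroup G T \<Longrightarrow> t (g \<otimes>\<^bsub>G\<^esub> h) = t g \<and> d (g \<otimes>\<^bsub>G\<^esub> h) = d g"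
    and t1: "t \<one>\<^bsub>G\<^esub> = 0"
    and dh: "\<And>g h. g \<in> carrier G \<Longrightarrow> h \<in> carrier G \<Longrightarrow> d (g \<otimes>\<^bsub>G\<^esub> h) = d g + d h"
    using tdq by (auto simp: quot_pairs_def)
  interpret tsq G t
  proof (intro tsq.intro tsq_axioms.intro grp)
    fix x w assume "x \<in> carrier G" "w \<in> carrier G"
    thus "t (x \<otimes>\<^bsub>G\<^esub> (w \<otimes>\<^bsub>G\<^esub> w)) = t x" using invq sq_in_sq_subgroup[OF pg] by blast
  qed
  have d1: "d \<one>\<^bsub>G\<^esub> = 0"
  proof -
    have "d \<one>\<^bsub>G\<^esub> = d \<one>\<^bsub>G\<^esub> + d \<one>\<^bsub>G\<^esub>" using dh[of "\<one>\<^bsub>G\<^esub>" "\<one>\<^bsub>G\<^esub>"] grp by (simp add: group.is_monoid)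
    thus ?thesis by simp
  qed
  let ?c = "mk_law G t d :: ('g \<Rightarrow>\<^sub>0 nat) \<Rightarrow> 'a dual"
  have sym: "\<And>x y. x \<in> carrier G \<Longrightarrow> y \<in> carrier G \<Longrightarrow> t (inv\<^bsub>G\<^esub> x \<otimes>\<^bsub>G\<^esub> y) = t (inv\<^bsub>G\<^esub> y \<otimes>\<^bsub>G\<^esub> x)"
    by (rule Tinv)
  have csq: "\<And>g. g \<in> carrier G \<Longrightarrow> ?c (sq2 g) = Dual 1 (d g)" by (rule mk_sq)
  have cbet: "\<And>a b. a \<in> carrier G \<Longrightarrow> b \<in> carrier G \<Longrightarrow> bet ?c a b = Dual 0 (t (inv\<^bsub>G\<^esub> a \<otimes>\<^bsub>G\<^esub> b))"
    by (rule bet_mk[OF grp two _ _ t1 sym])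
  have dtr: "\<And>g. g \<in> carrier G \<Longrightarrow> det_trace G ?c g = Dual 0 (t g)"
    using grp by (simp add: det_trace_eq cbet group.is_monoid)
  have don: "\<And>g. g \<in> carrier G \<Longrightarrow> det_on G ?c g = Dual 1 (d g)"
    by (simp add: det_on_eq csq)
  have cont1: "continuous_map T (discrete_topology UNIV) (det_trace G ?c)"
  proof -
    have "continuous_map T (discrete_topology UNIV) (Dual 0 \<circ> t)"
      by (rule continuous_map_compose[OF ct]) simp
    thus ?thesis by (rule continuous_map_eq) (simp add: top dtr)
  qed
  have cont2: "continuous_map T (discrete_topology UNIV) (det_on G ?c)"
  proof -
    have "continuous_map T (discrete_topology UNIV) (Dual 1 \<circ> d)"
      by (rule continuous_map_compose[OF cd]) simp
    thus ?thesis by (rule continuous_map_eq) (simp add: top don)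
  qed
  let ?io = "iota :: 'a dual \<Rightarrow> (('g \<times> bool) \<Rightarrow>\<^sub>0 nat) \<Rightarrow>\<^sub>0 'a dual"
  interpret T0: tdet G "?io \<circ> ?c" "?io (Dual 0 1)" "\<lambda>k. ?io (Dual (t k) 0)"
  proof (intro tdet.intro tdet_axioms.intro grp)
    show "(2 :: (('g \<times> bool) \<Rightarrow>\<^sub>0 nat) \<Rightarrow>\<^sub>0 'a dual) = 0"
      using iota_two[symmetric] two_dual[OF two] iota_zero by metis
    show "?io (Dual 0 1) * ?io (Dual 0 1) = 0"
      by (simp add: iota_mult[symmetric] Dual_mult iota_zero)
    fix g h assume g: "g \<in> carrier G" and h: "h \<in> carrier G"
    show "(?io \<circ> ?c) (sq2 (g \<otimes>\<^bsub>G\<^esub> h)) = (?io \<circ> ?c) (sq2 g) * (?io \<circ> ?c) (sq2 h)"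
      using g h grp by (simp add: csq iota_mult[symmetric] Dual_mult dh add.commute group.is_monoid)
  next
    fix g assume g: "g \<in> carrier G"
    show "?io (Dual 0 1) * (?io \<circ> ?c) (sq2 g) = ?io (Dual 0 1)"
      using g by (simp add: csq iota_mult[symmetric] Dual_mult)
  next
    fix a b assume a: "a \<in> carrier G" and b: "b \<in> carrier G"
    show "bet (?io \<circ> ?c) a b = ?io (Dual 0 1) * ?io (Dual (t (inv\<^bsub>G\<^esub> a \<otimes>\<^bsub>G\<^esub> b)) 0)"
      using a b by (simp add: bet_iota cbet iota_mult[symmetric] Dual_mult)
  next
    fix b c k assume "b \<in> carrier G" "c \<in> carrier G" "k \<in> carrier G"
    thus "?io (Dual (t (inv\<^bsub>G\<^esub> b \<otimes>\<^bsub>G\<^esub> k \<otimes>\<^bsub>G\<^esub> c)) 0) = ?io (Dual (t (inv\<^bsub>G\<^esub> c \<otimes>\<^bsub>G\<^esub> k \<otimes>\<^bsub>G\<^esub> b)) 0)"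
      by (simp add: Tsym)
  next
    fix b k assume "b \<in> carrier G" "k \<in> carrier G"
    thus "?io (Dual (t (inv\<^bsub>G\<^esub> b \<otimes>\<^bsub>G\<^esub> k \<otimes>\<^bsub>G\<^esub> b)) 0) = ?io (Dual (t k) 0)"
      by (simp add: Tconj)
  qed
  have det: "det2 G ?c"
    unfolding det2_def
  proof (intro conjI allI impI)
    show "law2 G ?c" by (simp add: law2_def mk_out)
    have "galg_one G = dl \<one>\<^bsub>G\<^esub> (1 :: (('g \<times> bool) \<Rightarrow>\<^sub>0 nat) \<Rightarrow>\<^sub>0 'a dual)"
      by (simp add: galg_one_def dl_def fun_eq_iff)
    thus "law_eval ?c (\<lambda>a. Poly_Mapping.single 0 a) (galg_one G) = (1 :: (('g \<times> bool) \<Rightarrow>\<^sub>0 nat) \<Rightarrow>\<^sub>0 'a dual)"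
      using grp by (simp add: law_eval_iota Dv_dl csq d1 iota_one group.is_monoid)
    fix x y :: "'g \<Rightarrow> (('g \<times> bool) \<Rightarrow>\<^sub>0 nat) \<Rightarrow>\<^sub>0 'a dual"
    assume "galg_elem G x" "galg_elem G y"
    thus "law_eval ?c (\<lambda>a. Poly_Mapping.single 0 a) (galg_mult G x y)
        = law_eval ?c (\<lambda>a. Poly_Mapping.single 0 a) x * law_eval ?c (\<lambda>a. Poly_Mapping.single 0 a) y"
      unfolding law_eval_iota galg_elem_def by (intro T0.galg_Dv) auto
  qed
  have mem: "?c \<in> tangent_dets G T"
    unfolding tangent_dets_def using det cont1 cont2 mk_re by simp
  have "(\<lambda>g\<in>carrier G. eps (det_trace G ?c g)) = (\<lambda>g\<in>carrier G. t g)"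
    by (rule restrict_ext) (simp add: dtr)
  moreover have "(\<lambda>g\<in>carrier G. eps (det_on G ?c g)) = (\<lambda>g\<in>carrier G. d g)"
    by (rule restrict_ext) (simp add: don)
  ultimately have "tau_delta G ?c = (t, d)"
    unfolding tau_delta_def using extensional_restrict[OF tex] extensional_restrict[OF dext]
    by simp
  thus ?thesis using mem by simp
qed

lemma eps_bet_add: "eps (bet (tangent_add c1 c2) a b) = eps (bet c1 a b) + eps (bet c2 a b)"
  by (cases "a = b") (simp_all add: bet_def tangent_add_def distrib_left)

lemma eps_bet_smult: "eps (bet (tangent_smult r c) a b) = r * eps (bet c a b)"
  by (cases "a = b") (simp_all add: bet_def tangent_smult_def mult.left_commute)

lemma lin_add:
  "tau_delta G (tangent_add c1 c2) = ((\<lambda>g\<in>carrier G. fst (tau_delta G c1) g + fst (tau_delta G c2) g),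
     (\<lambda>g\<in>carrier G. snd (tau_delta G c1) g + snd (tau_delta G c2) g))"
proof -
  have "(\<lambda>g\<in>carrier G. eps (det_trace G (tangent_add c1 c2) g))
      = (\<lambda>g\<in>carrier G. fst (tau_delta G c1) g + fst (tau_delta G c2) g)"
    by (rule restrict_ext) (simp add: tau_delta_def det_trace_eq eps_bet_add)
  moreover have "(\<lambda>g\<in>carrier G. eps (det_on G (tangent_add c1 c2) g))
      = (\<lambda>g\<in>carrier G. snd (tau_delta G c1) g + snd (tau_delta G c2) g)"
    by (rule restrict_ext) (simp add: tau_delta_def det_on_eq tangent_add_def)
  ultimately show ?thesis by (simp add: tau_delta_def)
qed

lemma lin_smult:
  "tau_delta G (tangent_smult r c) = ((\<lambda>g\<in>carrier G. r * fst (tau_delta G c) g),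
     (\<lambda>g\<in>carrier G. r * snd (tau_delta G c) g))"
proof -
  have "(\<lambda>g\<in>carrier G. eps (det_trace G (tangent_smult r c) g))
      = (\<lambda>g\<in>carrier G. r * fst (tau_delta G c) g)"
    by (rule restrict_ext) (simp add: tau_delta_def det_trace_eq eps_bet_smult)
  moreover have "(\<lambda>g\<in>carrier G. eps (det_on G (tangent_smult r c) g))
      = (\<lambda>g\<in>carrier G. r * snd (tau_delta G c) g)"
    by (rule restrict_ext) (simp add: tau_delta_def det_on_eq tangent_smult_def)
  ultimately show ?thesis by (simp add: tau_delta_def)
qed

theorem mainTheorem19:
  fixes G :: "('g, 'b) monoid_scheme" and T :: "'g topology"
  assumes "profinite_group G T"
    and "(2 :: 'a :: comm_ring_1) = 0"
  shows "(\<forall>c \<in> (tangent_dets G T :: (('g \<Rightarrow>\<^sub>0 nat) \<Rightarrow> 'a dual) set). \<forall>g\<in>carrier G.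
            (\<exists>!t. det_trace G c g = 2 + Dual 0 t) \<and> (\<exists>!d. det_on G c g = 1 + Dual 0 d))
       \<and> bij_betw (tau_delta G) (tangent_dets G T :: (('g \<Rightarrow>\<^sub>0 nat) \<Rightarrow> 'a dual) set) (quot_pairs G T)
       \<and> (\<forall>c1\<in>(tangent_dets G T :: (('g \<Rightarrow>\<^sub>0 nat) \<Rightarrow> 'a dual) set). \<forall>c2\<in>(tangent_dets G T :: (('g \<Rightarrow>\<^sub>0 nat) \<Rightarrow> 'a dual) set).
            tau_delta G (tangent_add c1 c2)
              = ((\<lambda>g\<in>carrier G. fst (tau_delta G c1) g + fst (tau_delta G c2) g),
                 (\<lambda>g\<in>carrier G. snd (tau_delta G c1) g + snd (tau_delta G c2) g)))
       \<and> (\<forall>a :: 'a. \<forall>c\<in>tangent_dets G T.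
            tau_delta G (tangent_smult a c)
              = ((\<lambda>g\<in>carrier G. a * fst (tau_delta G c) g),
                 (\<lambda>g\<in>carrier G. a * snd (tau_delta G c) g)))"
proof -
  have A: "\<forall>c \<in> (tangent_dets G T :: (('g \<Rightarrow>\<^sub>0 nat) \<Rightarrow> 'a dual) set). \<forall>g\<in>carrier G.
            (\<exists>!t. det_trace G c g = 2 + Dual 0 t) \<and> (\<exists>!d. det_on G c g = 1 + Dual 0 d)"
    using part1[OF assms] by blast
  have B: "bij_betw (tau_delta G) (tangent_dets G T :: (('g \<Rightarrow>\<^sub>0 nat) \<Rightarrow> 'a dual) set) (quot_pairs G T)"
    unfolding bij_betw_def
  proof
    show "inj_on (tau_delta G) (tangent_dets G T :: (('g \<Rightarrow>\<^sub>0 nat) \<Rightarrow> 'a dual) set)"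
      by (rule inj_onI) (rule part_inj[OF assms])
    show "tau_delta G ` (tangent_dets G T :: (('g \<Rightarrow>\<^sub>0 nat) \<Rightarrow> 'a dual) set) = quot_pairs G T"
    proof
      show "tau_delta G ` (tangent_dets G T :: (('g \<Rightarrow>\<^sub>0 nat) \<Rightarrow> 'a dual) set) \<subseteq> quot_pairs G T"
        using part_image[OF assms] by blast
      show "quot_pairs G T \<subseteq> tau_delta G ` (tangent_dets G T :: (('g \<Rightarrow>\<^sub>0 nat) \<Rightarrow> 'a dual) set)"
      proof
        fix p :: "('g \<Rightarrow> 'a) \<times> ('g \<Rightarrow> 'a)" assume p: "p \<in> quot_pairs G T"
        obtain t d where td: "p = (t, d)" by (cases p)
        have "(mk_law G t d :: ('g \<Rightarrow>\<^sub>0 nat) \<Rightarrow> 'a dual) \<in> tangent_dets G T \<and> tau_delta G (mk_law G t d) = (t, d)"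
          using part_surj[OF assms] p td by blast
        thus "p \<in> tau_delta G ` (tangent_dets G T :: (('g \<Rightarrow>\<^sub>0 nat) \<Rightarrow> 'a dual) set)"
          using td by (metis image_eqI)
      qed
    qed
  qed
  show ?thesis using A B lin_add lin_smult by blast
qed

end
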